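(* Suppose $B$ is small and let $\sigma\in\Sigma$. (a) The $B$-graded ring $S_{B,\sigma}$ is strongly graded, i.e. $(S_{B,\sigma})_{\alpha+\beta}$ is the additive subgroup generated by the products $(S_{B,\sigma})_\alpha(S_{B,\sigma})_\beta$ for all $\alpha,\beta\in B$. (b) For every $B$-graded $S_B$-module $F$ and every $\alpha\in B$ there is an isomorphism of $S_{(\sigma)}$-modules $(F_\sigma)_\alpha\cong F_{(\sigma)}$.
   Context: Let $V$ be a real vector space of finite dimension $n$, $N\subseteq V$ a lattice (free $\mathbb{Z}$-submodule of rank $n$ spanning $V$), $M=\mathrm{Hom}(N,\mathbb{Z})$. Let $\Sigma$ be an $N$-fan: a finite set of sharp (containing no line) polyhedral cones in $V$, each the conic hull of finitely many elements of $N$, closed under faces, with the intersection of two cones a face of each; $\tau\preccurlyeq\sigma$ means $\tau$ is a face of $\sigma$. Let $\Sigma_1$ be the set of rays, $\sigma_1$ the rays that are faces of $\sigma$, $\rho_N$ the primitive generator of $N\cap\rho$. Let $c\colon M\to\mathbb{Z}^{\Sigma_1}$, $m\mapsto(m(\rho_N))_\rho$, $a\colon\mathbb{Z}^{\Sigma_1}\to A$ its cokernel, $\alpha_\rho=a(\delta_\rho)$, and $\widehat\alpha_\sigma=\sum_{\rho\in\Sigma_1\setminus\sigma_1}\alpha_\rho$. Picard group: with $\sigma^\perp_M=\{u\in M\mid u(\sigma)=0\}$, let $\overline P$ be the group of families $(m_\sigma)_{\sigma\in\Sigma}\in M^\Sigma$ with $m_\sigma-m_\tau\in\tau^\perp_M$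 for all $\tau\preccurlyeq\sigma$, modulo $\prod_\sigma\sigma^\perp_M$; $\mathrm{Pic}(\Sigma)$ is $\overline P$ modulo the image of the diagonal $M\to\overline P$; it is regarded as a subgroup of $A$ via the injective map induced by $(m_\sigma)\mapsto a((m_\rho(\rho_N))_{\rho\in\Sigma_1})$. Let $B\subseteq A$ be a subgroup of finite index ("big"); $B$ is called small if $B\subseteq\mathrm{Pic}(\Sigma)$. Let $R$ be a commutative ring, $S_A=R[Z_\rho\mid\rho\in\Sigma_1]$ graded by $A$ with $\deg Z_\rho=\alpha_\rho$, and $S_B=\bigoplus_{\alpha\in B}(S_A)_\alpha$. For $\sigma\in\Sigma$ let $\widehat Z_\sigma=\prod_{\rho\in\Sigma_1\setminus\sigma_1}Z_\rho$ (of degree $\widehat\alpha_\sigma$); choose $m\geq1$ with $m\widehat\alpha_\sigma\in B$ for all $\sigma$. For a $B$-graded $S_B$-module $F$, $F_\sigma$ denotes the $B$-graded localization of $F$ at $\widehat Z_\sigma^m$ (independent of $m$), $S_{B,\sigma}=(S_B)_\sigma$, $F_{(\sigma)}=(F_\sigma)_0$ and $S_{(\sigma)}=(S_{B,\sigma})_0$. *)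

theory Defs
  imports "HOL-Analysis.Analysis" "HOL-Library.Poly_Mapping" "HOL-Library.Function_Algebras"
begin

definition is_lattice :: "'a::euclidean_space set \<Rightarrow> bool" where
  "is_lattice N \<longleftrightarrow> (\<exists>B. independent B \<and> span B = UNIV \<and>
      N = {x. \<exists>k::'a \<Rightarrow> int. x = (\<Sum>b\<in>B. of_int (k b) *\<^sub>R b)})"

text \<open>M = Hom(N, Z): additive maps N -> Z (extended by 0 outside N).\<close>
definition dual_lattice :: "'a::euclidean_space set \<Rightarrow> ('a \<Rightarrow> int) set" where
  "dual_lattice N = {u. (\<forall>x\<in>N. \<forall>y\<in>N. u (x + y) = u x + u y) \<and> (\<forall>x. x \<notin> N \<longrightarrow> u x = 0)}"

text \<open>sigma-perp in M: the u in M vanishing on sigma (u is only defined on N, so on sigma \<inter> N).\<close>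
definition perpM :: "'a::euclidean_space set \<Rightarrow> 'a set \<Rightarrow> ('a \<Rightarrow> int) set" where
  "perpM N \<sigma> = {u \<in> dual_lattice N. \<forall>x\<in>\<sigma> \<inter> N. u x = 0}"

definition cone_gen :: "'a::euclidean_space set \<Rightarrow> 'a set" where
  "cone_gen S = {x. \<exists>c. (\<forall>v\<in>S. c v \<ge> 0) \<and> x = (\<Sum>v\<in>S. c v *\<^sub>R v)}"

definition lattice_cone :: "'a::euclidean_space set \<Rightarrow> 'a set \<Rightarrow> bool" where
  "lattice_cone N \<sigma> \<longleftrightarrow> (\<exists>S. finite S \<and> S \<subseteq> N \<and> \<sigma> = cone_gen S)"

definition sharp :: "'a::euclidean_space set \<Rightarrow> bool" where
  "sharp \<sigma> \<longleftrightarrow> \<not> (\<exists>a v. v \<noteq> 0 \<and> (\<forall>t::real. a + t *\<^sub>R v \<in> \<sigma>))"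

definition is_face :: "'a::euclidean_space set \<Rightarrow> 'a set \<Rightarrow> bool" where
  "is_face \<tau> \<sigma> \<longleftrightarrow> \<tau> face_of \<sigma> \<and> \<tau> \<noteq> {}"

definition is_fan :: "'a::euclidean_space set \<Rightarrow> 'a set set \<Rightarrow> bool" where
  "is_fan N \<Sigma> \<longleftrightarrow> finite \<Sigma> \<and>
     (\<forall>\<sigma>\<in>\<Sigma>. lattice_cone N \<sigma> \<and> sharp \<sigma>) \<and>
     (\<forall>\<sigma>\<in>\<Sigma>. \<forall>\<tau>. is_face \<tau> \<sigma> \<longrightarrow> \<tau> \<in> \<Sigma>) \<and>
     (\<forall>\<sigma>\<in>\<Sigma>. \<forall>\<sigma>'\<in>\<Sigma>. is_face (\<sigma> \<inter> \<sigma>') \<sigma> \<and> is_face (\<sigma> \<inter> \<sigma>') \<sigma>')"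

definition rays :: "'a::euclidean_space set set \<Rightarrow> 'a set set" where
  "rays \<Sigma> = {\<rho> \<in> \<Sigma>. aff_dim \<rho> = 1}"

definition rays_of :: "'a::euclidean_space set set \<Rightarrow> 'a set \<Rightarrow> 'a set set" where
  "rays_of \<Sigma> \<sigma> = {\<rho> \<in> rays \<Sigma>. is_face \<rho> \<sigma>}"

definition prim :: "'a::euclidean_space set \<Rightarrow> 'a set \<Rightarrow> 'a" where
  "prim N \<rho> = (THE v. v \<in> N \<inter> \<rho> \<and> v \<noteq> 0 \<and> (\<forall>w\<in>N \<inter> \<rho>. \<exists>k::nat. w = of_nat k *\<^sub>R v))"

definition ZS :: "'a::euclidean_space set set \<Rightarrow> ('a set \<Rightarrow> int) set" where
  "ZS \<Sigma> = {x. \<forall>\<rho>. \<rho> \<notin> rays \<Sigma> \<longrightarrow> x \<rho> = 0}"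

definition cmap :: "'a::euclidean_space set \<Rightarrow> 'a set set \<Rightarrow> ('a \<Rightarrow> int) \<Rightarrow> ('a set \<Rightarrow> int)" where
  "cmap N \<Sigma> u = (\<lambda>\<rho>. if \<rho> \<in> rays \<Sigma> then u (prim N \<rho>) else 0)"

text \<open>image of c; A = ZS / imc. Elements of A are represented by elements of ZS,
  and x, y represent the same element of A iff x - y \<in> imc.\<close>
definition imc :: "'a::euclidean_space set \<Rightarrow> 'a set set \<Rightarrow> ('a set \<Rightarrow> int) set" where
  "imc N \<Sigma> = cmap N \<Sigma> ` dual_lattice N"

text \<open>Preimage in ZS of Pic(Sigma) \<subseteq> A (under the injective map (m_sigma) |-> a((m_rho(rho_N))_rho)).\<close>
definition Pic_pre :: "'a::euclidean_space set \<Rightarrow> 'a set set \<Rightarrow> ('a set \<Rightarrow> int) set" where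
  "Pic_pre N \<Sigma> = {x \<in> ZS \<Sigma>. \<exists>ms :: 'a set \<Rightarrow> ('a \<Rightarrow> int).
      (\<forall>\<sigma>\<in>\<Sigma>. ms \<sigma> \<in> dual_lattice N) \<and>
      (\<forall>\<sigma>\<in>\<Sigma>. \<forall>\<tau>. is_face \<tau> \<sigma> \<longrightarrow> ms \<sigma> - ms \<tau> \<in> perpM N \<tau>) \<and>
      x - (\<lambda>\<rho>. if \<rho> \<in> rays \<Sigma> then ms \<rho> (prim N \<rho>) else 0) \<in> imc N \<Sigma>}"

text \<open>A subgroup B of A, represented by its preimage Bp in ZS (a subgroup of ZS containing imc).
  Big = finite index.\<close>
definition big_subgroup :: "'a::euclidean_space set \<Rightarrow> 'a set set \<Rightarrow> ('a set \<Rightarrow> int) set \<Rightarrow> bool" where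
  "big_subgroup N \<Sigma> Bp \<longleftrightarrow> Bp \<subseteq> ZS \<Sigma> \<and> imc N \<Sigma> \<subseteq> Bp \<and> 0 \<in> Bp \<and>
     (\<forall>x\<in>Bp. \<forall>y\<in>Bp. x + y \<in> Bp) \<and> (\<forall>x\<in>Bp. - x \<in> Bp) \<and>
     (\<exists>F. finite F \<and> F \<subseteq> ZS \<Sigma> \<and> (\<forall>z\<in>ZS \<Sigma>. \<exists>f\<in>F. z - f \<in> Bp))"

definition small_subgroup :: "'a::euclidean_space set \<Rightarrow> 'a set set \<Rightarrow> ('a set \<Rightarrow> int) set \<Rightarrow> bool" where
  "small_subgroup N \<Sigma> Bp \<longleftrightarrow> Bp \<subseteq> Pic_pre N \<Sigma>"

definition hatvec :: "'a::euclidean_space set set \<Rightarrow> 'a set \<Rightarrow> ('a set \<Rightarrow> int)" where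
  "hatvec \<Sigma> \<sigma> = (\<lambda>\<rho>. if \<rho> \<in> rays \<Sigma> - rays_of \<Sigma> \<sigma> then 1 else 0)"

type_synonym ('a, 'r) pol = "('a set \<Rightarrow>\<^sub>0 nat) \<Rightarrow>\<^sub>0 'r"

definition SA :: "'a::euclidean_space set set \<Rightarrow> ('a, 'r::comm_ring_1) pol set" where
  "SA \<Sigma> = {p. \<forall>\<mu>\<in>Poly_Mapping.keys p. Poly_Mapping.keys \<mu> \<subseteq> rays \<Sigma>}"

definition mdeg :: "('a set \<Rightarrow>\<^sub>0 nat) \<Rightarrow> ('a set \<Rightarrow> int)" where
  "mdeg \<mu> = (\<lambda>\<rho>. int (Poly_Mapping.lookup \<mu> \<rho>))"

definition Scomp :: "'a::euclidean_space set \<Rightarrow> 'a set set \<Rightarrow> ('a set \<Rightarrow> int) \<Rightarrow> ('a, 'r::comm_ring_1) pol set" where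
  "Scomp N \<Sigma> x = {p \<in> SA \<Sigma>. \<forall>\<mu>\<in>Poly_Mapping.keys p. mdeg \<mu> - x \<in> imc N \<Sigma>}"

definition SB :: "'a::euclidean_space set set \<Rightarrow> ('a set \<Rightarrow> int) set \<Rightarrow> ('a, 'r::comm_ring_1) pol set" where
  "SB \<Sigma> Bp = {p \<in> SA \<Sigma>. \<forall>\<mu>\<in>Poly_Mapping.keys p. mdeg \<mu> \<in> Bp}"

definition Zhat :: "'a::euclidean_space set set \<Rightarrow> 'a set \<Rightarrow> ('a, 'r::comm_ring_1) pol" where
  "Zhat \<Sigma> \<sigma> = Poly_Mapping.single (\<Sum>\<rho>\<in>rays \<Sigma> - rays_of \<Sigma> \<sigma>. Poly_Mapping.single \<rho> 1) 1"

text \<open>A B-graded S_B-module: underlying abelian group the type 'm, scalar action act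
  (module axioms for scalars in S_B), components Fg x for x \<in> Bp (depending only on the class
  of x in A), internal direct sum, and (S_A)_alpha (F_beta) \<subseteq> F_(alpha+beta).\<close>
definition graded_module ::
  "'a::euclidean_space set \<Rightarrow> 'a set set \<Rightarrow> ('a set \<Rightarrow> int) set \<Rightarrow>
   (('a, 'r::comm_ring_1) pol \<Rightarrow> 'm::ab_group_add \<Rightarrow> 'm) \<Rightarrow> (('a set \<Rightarrow> int) \<Rightarrow> 'm set) \<Rightarrow> bool" where
  "graded_module N \<Sigma> Bp act Fg \<longleftrightarrow>
     (\<forall>p\<in>SB \<Sigma> Bp. \<forall>q\<in>SB \<Sigma> Bp. \<forall>v. act (p + q) v = act p v + act q v) \<and>
     (\<forall>p\<in>SB \<Sigma> Bp. \<forall>v w. act p (v + w) = act p v + act p w) \<and>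
     (\<forall>p\<in>SB \<Sigma> Bp. \<forall>q\<in>SB \<Sigma> Bp. \<forall>v. act (p * q) v = act p (act q v)) \<and>
     (\<forall>v. act 1 v = v) \<and>
     (\<forall>x\<in>Bp. 0 \<in> Fg x \<and> (\<forall>v\<in>Fg x. \<forall>w\<in>Fg x. v + w \<in> Fg x) \<and> (\<forall>v\<in>Fg x. - v \<in> Fg x)) \<and>
     (\<forall>x\<in>Bp. \<forall>y\<in>Bp. x - y \<in> imc N \<Sigma> \<longrightarrow> Fg x = Fg y) \<and>
     (\<forall>v. \<exists>X g. finite X \<and> X \<subseteq> Bp \<and> (\<forall>x\<in>X. g x \<in> Fg x) \<and> v = (\<Sum>x\<in>X. g x)) \<and>
     (\<forall>X g. finite X \<and> X \<subseteq> Bp \<and> (\<forall>x\<in>X. \<forall>y\<in>X. x - y \<in> imc N \<Sigma> \<longrightarrow> x = y) \<and>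
        (\<forall>x\<in>X. g x \<in> Fg x) \<and> (\<Sum>x\<in>X. g x) = 0 \<longrightarrow> (\<forall>x\<in>X. g x = 0)) \<and>
     (\<forall>x\<in>Bp. \<forall>y\<in>Bp. \<forall>p\<in>Scomp N \<Sigma> x. \<forall>v\<in>Fg y. act p v \<in> Fg (x + y))"

text \<open>Pairs (v,k) stand for v / f^k; C is the carrier of the module.\<close>
definition loc_rel :: "('p::monoid_mult \<Rightarrow> 'm \<Rightarrow> 'm) \<Rightarrow> 'p \<Rightarrow> 'm set \<Rightarrow> (('m \<times> nat) \<times> ('m \<times> nat)) set" where
  "loc_rel act f C = {((v, k), (w, l)). v \<in> C \<and> w \<in> C \<and> (\<exists>j. act (f ^ (j + l)) v = act (f ^ (j + k)) w)}"

definition loc_cls :: "('p::monoid_mult \<Rightarrow> 'm \<Rightarrow> 'm) \<Rightarrow> 'p \<Rightarrow> 'm set \<Rightarrow> 'm \<times> nat \<Rightarrow> ('m \<times> nat) set" where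
  "loc_cls act f C vk = loc_rel act f C `` {vk}"

definition loc_zero :: "('p::monoid_mult \<Rightarrow> 'm::zero \<Rightarrow> 'm) \<Rightarrow> 'p \<Rightarrow> 'm set \<Rightarrow> ('m \<times> nat) set" where
  "loc_zero act f C = loc_cls act f C (0, 0)"

definition loc_add :: "('p::monoid_mult \<Rightarrow> 'm::plus \<Rightarrow> 'm) \<Rightarrow> 'p \<Rightarrow> 'm set \<Rightarrow>
    ('m \<times> nat) set \<Rightarrow> ('m \<times> nat) set \<Rightarrow> ('m \<times> nat) set" where
  "loc_add act f C c d = the_elem ((\<lambda>((v, k), (w, l)). loc_cls act f C (act (f ^ l) v + act (f ^ k) w, k + l)) ` (c \<times> d))"

definition loc_neg :: "('p::monoid_mult \<Rightarrow> 'm::uminus \<Rightarrow> 'm) \<Rightarrow> 'p \<Rightarrow> 'm set \<Rightarrow>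
    ('m \<times> nat) set \<Rightarrow> ('m \<times> nat) set" where
  "loc_neg act f C c = the_elem ((\<lambda>(v, k). loc_cls act f C (- v, k)) ` c)"

text \<open>Action of the localized ring (classes of pairs (p,k) of ring elements) on the localized
  module; with act = ( * ) this is the multiplication of the localized ring.\<close>
definition loc_smul :: "('p::monoid_mult \<Rightarrow> 'm \<Rightarrow> 'm) \<Rightarrow> 'p \<Rightarrow> 'm set \<Rightarrow>
    ('p \<times> nat) set \<Rightarrow> ('m \<times> nat) set \<Rightarrow> ('m \<times> nat) set" where
  "loc_smul act f C s c = the_elem ((\<lambda>((p, k), (v, l)). loc_cls act f C (act p v, k + l)) ` (s \<times> c))"

inductive_set loc_subgroup_gen :: "('p::monoid_mult \<Rightarrow> 'm::ab_group_add \<Rightarrow> 'm) \<Rightarrow> 'p \<Rightarrow> 'm set \<Rightarrow>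
    ('m \<times> nat) set set \<Rightarrow> ('m \<times> nat) set set"
  for act f C G where
  gen_zero: "loc_zero act f C \<in> loc_subgroup_gen act f C G"
| gen_base: "g \<in> G \<Longrightarrow> g \<in> loc_subgroup_gen act f C G"
| gen_add: "c \<in> loc_subgroup_gen act f C G \<Longrightarrow> d \<in> loc_subgroup_gen act f C G \<Longrightarrow>
     loc_add act f C c d \<in> loc_subgroup_gen act f C G"
| gen_neg: "c \<in> loc_subgroup_gen act f C G \<Longrightarrow> loc_neg act f C c \<in> loc_subgroup_gen act f C G"

definition locf :: "'a::euclidean_space set set \<Rightarrow> 'a set \<Rightarrow> nat \<Rightarrow> ('a, 'r::comm_ring_1) pol" where
  "locf \<Sigma> \<sigma> m = Zhat \<Sigma> \<sigma> ^ m"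

definition SBloc_comp :: "'a::euclidean_space set \<Rightarrow> 'a set set \<Rightarrow> ('a set \<Rightarrow> int) set \<Rightarrow> 'a set \<Rightarrow> nat \<Rightarrow>
    ('a set \<Rightarrow> int) \<Rightarrow> (('a, 'r::comm_ring_1) pol \<times> nat) set set" where
  "SBloc_comp N \<Sigma> Bp \<sigma> m x = {loc_cls (*) (locf \<Sigma> \<sigma> m) (SB \<Sigma> Bp) (p, k) | p k.
      p \<in> SB \<Sigma> Bp \<and> p \<in> Scomp N \<Sigma> (x + of_nat (k * m) * hatvec \<Sigma> \<sigma>)}"

definition Floc_comp :: "'a::euclidean_space set \<Rightarrow> 'a set set \<Rightarrow> 'a set \<Rightarrow> nat \<Rightarrow>
    (('a, 'r::comm_ring_1) pol \<Rightarrow> 'm::ab_group_add \<Rightarrow> 'm) \<Rightarrow> (('a set \<Rightarrow> int) \<Rightarrow> 'm set) \<Rightarrow>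
    ('a set \<Rightarrow> int) \<Rightarrow> ('m \<times> nat) set set" where
  "Floc_comp N \<Sigma> \<sigma> m act Fg x = {loc_cls act (locf \<Sigma> \<sigma> m) UNIV (v, k) | v k.
      v \<in> Fg (x + of_nat (k * m) * hatvec \<Sigma> \<sigma>)}"

end

theory Submission
  imports Defs
begin


lemma lattice_props:
  assumes "is_lattice N"
  obtains B where "finite B" "\<And>c. (\<Sum>v\<in>B. c v *\<^sub>R v) = 0 \<Longrightarrow> \<forall>v\<in>B. c v = 0"
    "N = {x. \<exists>k::'a::euclidean_space \<Rightarrow> int. x = (\<Sum>b\<in>B. of_int (k b) *\<^sub>R b)}"
proof -
  from assms obtain B where B: "independent B" "N = {x. \<exists>k::'a \<Rightarrow> int. x = (\<Sum>b\<in>B. of_int (k b) *\<^sub>R b)}"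
    unfolding is_lattice_def by blast
  from B(1) have "finite B \<and> (\<forall>c. (\<Sum>v\<in>B. c v *\<^sub>R v) = 0 \<longrightarrow> (\<forall>v \<in> B. c v = 0))"
    using independent_explicit by blast
  with B(2) show ?thesis using that by blast
qed

lemma lattice_diff:
  assumes "is_lattice N" "a \<in> N" "b \<in> N" shows "a - b \<in> N"
proof -
  obtain B where B: "N = {x. \<exists>k::'a::euclidean_space \<Rightarrow> int. x = (\<Sum>b\<in>B. of_int (k b) *\<^sub>R b)}"
    using lattice_props[OF assms(1)] by blast
  from assms(2,3) obtain ka kb where "a = (\<Sum>b\<in>B. of_int (ka b) *\<^sub>R b)" "b = (\<Sum>b\<in>B. of_int (kb b) *\<^sub>R b)"
    unfolding B by blast
  then have "a - b = (\<Sum>c\<in>B. of_int (ka c - kb c) *\<^sub>R c)"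
    by (simp add: sum_subtractf scaleR_diff_left)
  then show ?thesis unfolding B mem_Collect_eq by (intro exI[of _ "\<lambda>c. ka c - kb c"])
qed

lemma lattice_intscale:
  assumes "is_lattice N" "a \<in> N" shows "of_int (i::int) *\<^sub>R a \<in> N"
proof -
  obtain B where B: "N = {x. \<exists>k::'a::euclidean_space \<Rightarrow> int. x = (\<Sum>b\<in>B. of_int (k b) *\<^sub>R b)}"
    using lattice_props[OF assms(1)] by blast
  from assms(2) obtain ka where "a = (\<Sum>b\<in>B. of_int (ka b) *\<^sub>R b)"
    unfolding B by blast
  then have "of_int i *\<^sub>R a = (\<Sum>c\<in>B. of_int (i * ka c) *\<^sub>R c)"
    by (simp add: scaleR_sum_right)
  then show ?thesis unfolding B mem_Collect_eq by (intro exI[of _ "\<lambda>c. i * ka c"])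
qed

lemma lattice_coord:
  assumes "is_lattice N" "s \<in> N" "s \<noteq> 0"
  shows "\<exists>g::nat. g > 0 \<and> (\<forall>t. t *\<^sub>R s \<in> N \<longrightarrow> t * real g \<in> \<int>)"
proof -
  obtain B where fB: "finite B" and ind: "\<And>c. (\<Sum>v\<in>B. c v *\<^sub>R v) = 0 \<Longrightarrow> \<forall>v\<in>B. c v = 0"
    and B: "N = {x. \<exists>k::'a::euclidean_space \<Rightarrow> int. x = (\<Sum>b\<in>B. of_int (k b) *\<^sub>R b)}"
    using lattice_props[OF assms(1)] by blast
  from assms(2) obtain k where k: "s = (\<Sum>b\<in>B. of_int (k b) *\<^sub>R b)" unfolding B by blast
  have "\<exists>b0\<in>B. k b0 \<noteq> 0"
  proof (rule ccontr)
    assume "\<not> ?thesis"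
    then have "s = 0" unfolding k by simp
    with assms(3) show False by simp
  qed
  then obtain b0 where b0: "b0 \<in> B" "k b0 \<noteq> 0" by blast
  define g where "g = nat \<bar>k b0\<bar>"
  have gpos: "g > 0" using b0 by (simp add: g_def)
  have "t * real g \<in> \<int>" if ts: "t *\<^sub>R s \<in> N" for t
  proof -
    from ts obtain k' where k': "t *\<^sub>R s = (\<Sum>b\<in>B. of_int (k' b) *\<^sub>R b)" unfolding B by blast
    have "(\<Sum>b\<in>B. (t * of_int (k b) - of_int (k' b)) *\<^sub>R b) = t *\<^sub>R s - (\<Sum>b\<in>B. of_int (k' b) *\<^sub>R b)"
      by (simp add: k scaleR_sum_right sum_subtractf scaleR_diff_left)
    also have "\<dots> = 0" using k' by simp
    finally have "\<forall>v\<in>B. t * of_int (k v) - of_int (k' v) = 0" by (rule ind)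
    with b0 have e: "t * of_int (k b0) = of_int (k' b0)" by auto
    have "real g = \<bar>of_int (k b0)\<bar>" by (simp add: g_def)
    then have "t * real g = of_int (k' b0) \<or> t * real g = - of_int (k' b0)"
      using e by (cases "k b0 \<ge> 0") auto
    then show ?thesis by auto
  qed
  with gpos show ?thesis by blast
qed

lemma cone_gen_zero: "0 \<in> cone_gen S"
proof -
  show ?thesis unfolding cone_gen_def mem_Collect_eq
    by (rule exI[where x="\<lambda>_. 0"]) simp
qed

lemma cone_gen_gen: "finite S \<Longrightarrow> s \<in> S \<Longrightarrow> s \<in> cone_gen S"
proof -
  assume fs: "finite S" and ss: "s \<in> S"
  define c where "c = (\<lambda>v. if v = s then (1::real) else 0)"
  have "(\<Sum>v\<in>S. c v *\<^sub>R v) = (\<Sum>v\<in>S. if v = s then v else 0)"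
    by (rule sum.cong) (simp_all add: c_def)
  also have "\<dots> = s" using fs ss by (simp add: sum.delta')
  finally have "s = (\<Sum>v\<in>S. c v *\<^sub>R v)" by simp
  moreover have "\<forall>v\<in>S. c v \<ge> 0" by (simp add: c_def)
  ultimately show ?thesis unfolding cone_gen_def mem_Collect_eq
    by (intro exI[where x=c] conjI)
qed

lemma cone_gen_scale: "c \<ge> 0 \<Longrightarrow> a \<in> cone_gen S \<Longrightarrow> c *\<^sub>R a \<in> cone_gen S"
proof -
  assume c: "c \<ge> 0" and "a \<in> cone_gen S"
  then obtain d where d: "\<forall>v\<in>S. d v \<ge> 0" "a = (\<Sum>v\<in>S. d v *\<^sub>R v)" unfolding cone_gen_def by blast
  have "c *\<^sub>R a = (\<Sum>v\<in>S. (c * d v) *\<^sub>R v)" by (simp add: d(2) scaleR_sum_right)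
  moreover have "\<forall>v\<in>S. c * d v \<ge> 0" using c d(1) by simp
  ultimately show ?thesis unfolding cone_gen_def mem_Collect_eq
    by (intro exI[where x="\<lambda>v. c * d v"] conjI)
qed

lemma ray_structure:
  assumes "is_fan N \<Sigma>" "\<rho> \<in> rays \<Sigma>"
  obtains s where "s \<in> N" "s \<noteq> 0" "s \<in> \<rho>" "\<forall>w\<in>\<rho>. \<exists>t\<ge>0. w = t *\<^sub>R s"
    "\<And>t. t \<ge> 0 \<Longrightarrow> t *\<^sub>R s \<in> \<rho>"
proof -
  have r: "\<rho> \<in> \<Sigma>" "aff_dim \<rho> = 1" using assms(2) unfolding rays_def by auto
  with assms(1) have lc: "lattice_cone N \<rho>" and sh: "sharp \<rho>" unfolding is_fan_def by auto
  from lc obtain S where S: "finite S" "S \<subseteq> N" "\<rho> = cone_gen S" unfolding lattice_cone_def by blast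
  have "\<exists>s\<in>S. s \<noteq> 0"
  proof (rule ccontr)
    assume "\<not> ?thesis"
    then have S0: "\<forall>v\<in>S. v = 0" by blast
    have "\<rho> \<subseteq> {0}"
    proof
      fix x assume "x \<in> \<rho>"
      then obtain c where "x = (\<Sum>v\<in>S. c v *\<^sub>R v)" unfolding S(3) cone_gen_def by blast
      also have "\<dots> = 0" using S0 by (intro sum.neutral) simp
      finally show "x \<in> {0}" by simp
    qed
    moreover have "0 \<in> \<rho>" unfolding S(3) by (rule cone_gen_zero)
    ultimately have "\<rho> = {0}" by auto
    with r(2) show False by simp
  qed
  then obtain s where s: "s \<in> S" "s \<noteq> 0" by blast
  have sr: "s \<in> \<rho>" unfolding S(3) using S(1) s(1) by (rule cone_gen_gen)
  have scl: "t *\<^sub>R s \<in> \<rho>" if "t \<ge> 0" for t unfolding S(3) using that sr[unfolded S(3)] by (rule cone_gen_scale)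
  have "collinear \<rho>" using r(2) by (simp add: collinear_aff_dim)
  then obtain u where u: "\<forall>x\<in>\<rho>. \<forall>y\<in>\<rho>. \<exists>c. x - y = c *\<^sub>R u" unfolding collinear_def by blast
  have z: "0 \<in> \<rho>" unfolding S(3) by (rule cone_gen_zero)
  obtain c0 where "s - 0 = c0 *\<^sub>R u" using u[rule_format, OF sr z] by blast
  then have c0: "s = c0 *\<^sub>R u" by simp
  have c0nz: "c0 \<noteq> 0" using c0 s(2) by auto
  have lin: "\<exists>t. w = t *\<^sub>R s" if wr: "w \<in> \<rho>" for w
  proof -
    obtain c where "w - 0 = c *\<^sub>R u" using u[rule_format, OF wr z] by blast
    then have "w = c *\<^sub>R u" by simp
    then have "w = (c / c0) *\<^sub>R s" using c0nz by (simp add: c0)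
    then show ?thesis by blast
  qed
  have "\<exists>t\<ge>0. w = t *\<^sub>R s" if w: "w \<in> \<rho>" for w
  proof -
    obtain t where t: "w = t *\<^sub>R s" using lin w by blast
    show ?thesis
    proof (cases "t \<ge> 0")
      case True then show ?thesis using t by blast
    next
      case False
      have "\<forall>r::real. 0 + r *\<^sub>R s \<in> \<rho>"
      proof
        fix r :: real
        show "0 + r *\<^sub>R s \<in> \<rho>"
        proof (cases "r \<ge> 0")
          case True then show ?thesis using scl by simp
        next
          case False': False
          have rt: "r / t \<ge> 0" using False False' by (intro divide_nonpos_neg) auto
          have "(r / t) *\<^sub>R w \<in> \<rho>" unfolding S(3)
            using cone_gen_scale[OF rt w[unfolded S(3)]] .
          moreover have "(r / t) *\<^sub>R w = r *\<^sub>R s" using False by (simp add: t)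
          ultimately show ?thesis by simp
        qed
      qed
      with sh s(2) have False unfolding sharp_def by blast
      then show ?thesis ..
    qed
  qed
  then show ?thesis using that s S(2) sr scl by blast
qed

lemma prim_in:
  assumes "is_lattice N" "is_fan N \<Sigma>" "\<rho> \<in> rays \<Sigma>"
  shows "prim N \<rho> \<in> N \<inter> \<rho>"
proof -
  obtain s where s: "s \<in> N" "s \<noteq> 0" "s \<in> \<rho>" "\<forall>w\<in>\<rho>. \<exists>t\<ge>0. w = t *\<^sub>R s"
    "\<And>t. t \<ge> 0 \<Longrightarrow> t *\<^sub>R s \<in> \<rho>"
    using ray_structure[OF assms(2,3)] by blast
  obtain g :: nat where g: "g > 0" "\<And>t. t *\<^sub>R s \<in> N \<Longrightarrow> t * real g \<in> \<int>"
    using lattice_coord[OF assms(1) s(1,2)] by blast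
  define P where "P n \<longleftrightarrow> n > 0 \<and> (real n / real g) *\<^sub>R s \<in> N" for n :: nat
  have Pg: "P g" using g s(1) by (simp add: P_def)
  define n0 where "n0 = (LEAST n. P n)"
  have Pn0: "P n0" unfolding n0_def using Pg by (rule LeastI)
  have minn0: "\<And>n. P n \<Longrightarrow> n0 \<le> n" unfolding n0_def by (rule Least_le)
  define v where "v = (real n0 / real g) *\<^sub>R s"
  have vN: "v \<in> N" using Pn0 by (simp add: P_def v_def)
  have vr: "v \<in> \<rho>" unfolding v_def by (rule s(5)) simp
  have vnz: "v \<noteq> 0" using Pn0 g(1) s(2) by (simp add: P_def v_def)
  have mult: "\<exists>k::nat. w = of_nat k *\<^sub>R v" if w: "w \<in> N \<inter> \<rho>" for w
  proof -
    obtain t where t: "t \<ge> 0" "w = t *\<^sub>R s" using s(4) w by blast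
    have "t * real g \<in> \<int>" using g(2) w t by auto
    then obtain i where i: "t * real g = of_int i" by (auto elim: Ints_cases)
    have "i \<ge> 0" using t(1) g(1) i by (metis of_int_0_le_iff zero_le_mult_iff of_nat_0_le_iff)
    define n where "n = nat i"
    have tn: "t = real n / real g" using i g(1) \<open>i \<ge> 0\<close> by (simp add: n_def field_simps)
    define q where "q = n div n0"
    define r where "r = n mod n0"
    have n0pos: "n0 > 0" using Pn0 by (simp add: P_def)
    have nqr: "n = q * n0 + r" by (simp add: q_def r_def)
    have nreal: "real n = real q * real n0 + real r" using nqr by simp
    have e: "real n / real g - real q * (real n0 / real g) = real r / real g"
      using g(1) nreal by (simp add: field_simps)
    have "w - of_int (int q) *\<^sub>R v = (real n / real g - real q * (real n0 / real g)) *\<^sub>R s"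
      by (simp add: t(2) tn v_def scaleR_diff_left)
    then have "(real r / real g) *\<^sub>R s = w - of_int (int q) *\<^sub>R v" by (simp only: e)
    also have "\<dots> \<in> N" using lattice_diff[OF assms(1) _ lattice_intscale[OF assms(1) vN]] w by blast
    finally have rN: "(real r / real g) *\<^sub>R s \<in> N" .
    have "r = 0"
    proof (rule ccontr)
      assume "r \<noteq> 0"
      then have "P r" using rN by (simp add: P_def)
      then have "n0 \<le> r" by (rule minn0)
      moreover have "r < n0" using n0pos by (simp add: r_def)
      ultimately show False by simp
    qed
    then have e2: "real n / real g = real q * (real n0 / real g)"
      using nreal by (simp add: field_simps)
    have "w = of_nat q *\<^sub>R v"
      by (simp add: t(2) tn v_def e2)
    then show ?thesis by blast
  qed
  have pv: "v \<in> N \<inter> \<rho> \<and> v \<noteq> 0 \<and> (\<forall>w\<in>N \<inter> \<rho>. \<exists>k::nat. w = of_nat k *\<^sub>R v)"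
    using vN vr vnz mult by blast
  have uniq: "v' = v" if v': "v' \<in> N \<inter> \<rho> \<and> v' \<noteq> 0 \<and> (\<forall>w\<in>N \<inter> \<rho>. \<exists>k::nat. w = of_nat k *\<^sub>R v')" for v'
  proof -
    obtain k1 :: nat where k1: "v' = of_nat k1 *\<^sub>R v" using mult v' by blast
    obtain k2 :: nat where k2: "v = of_nat k2 *\<^sub>R v'" using v' vN vr by blast
    have "v = (of_nat k2 * of_nat k1) *\<^sub>R v" using k1 k2 by (metis scaleR_scaleR)
    have "(1 - of_nat k2 * of_nat k1) *\<^sub>R v = v - (of_nat k2 * of_nat k1) *\<^sub>R v"
      by (simp only: scaleR_diff_left scaleR_one)
    also have "\<dots> = 0" using \<open>v = (of_nat k2 * of_nat k1) *\<^sub>R v\<close> by simp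
    finally have "(1 - of_nat k2 * of_nat k1) *\<^sub>R v = 0" .
    then have "of_nat (k2 * k1) = (1::real)" using vnz by simp
    then have "k2 * k1 = 1" by (metis of_nat_1 of_nat_eq_iff)
    then have "k1 = 1" by simp
    then show ?thesis using k1 by simp
  qed
  have "prim N \<rho> = v" unfolding prim_def
    using pv uniq by (rule the_equality)
  then show ?thesis using vN vr by simp
qed




lemma dual_add: "u \<in> dual_lattice N \<Longrightarrow> v \<in> dual_lattice N \<Longrightarrow> u + v \<in> dual_lattice N"
  by (simp add: dual_lattice_def)

lemma dual_neg: "u \<in> dual_lattice N \<Longrightarrow> - u \<in> dual_lattice N"
  by (simp add: dual_lattice_def)

lemma dual_zero: "0 \<in> dual_lattice N"
  by (simp add: dual_lattice_def)

lemma cmap_add: "cmap N \<Sigma> (u + v) = cmap N \<Sigma> u + cmap N \<Sigma> v"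
  by (simp add: cmap_def fun_eq_iff)

lemma cmap_neg: "cmap N \<Sigma> (- u) = - cmap N \<Sigma> u"
  by (simp add: cmap_def fun_eq_iff)

lemma cmap_zero: "cmap N \<Sigma> 0 = 0"
  by (simp add: cmap_def fun_eq_iff)

lemma imc_add: "a \<in> imc N \<Sigma> \<Longrightarrow> b \<in> imc N \<Sigma> \<Longrightarrow> a + b \<in> imc N \<Sigma>"
  unfolding imc_def by (auto simp: cmap_add[symmetric] intro!: imageI dual_add)

lemma imc_neg: "a \<in> imc N \<Sigma> \<Longrightarrow> - a \<in> imc N \<Sigma>"
  unfolding imc_def by (auto simp: cmap_neg[symmetric] intro!: imageI dual_neg)

lemma imc_zero: "0 \<in> imc N \<Sigma>"
  unfolding imc_def using cmap_zero dual_zero by (metis image_eqI)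

lemma imc_diff: "a \<in> imc N \<Sigma> \<Longrightarrow> b \<in> imc N \<Sigma> \<Longrightarrow> a - b \<in> imc N \<Sigma>"
  using imc_add imc_neg by (metis diff_conv_add_uminus)

lemma mdeg_add: "mdeg (\<mu> + \<nu>) = mdeg \<mu> + mdeg \<nu>"
  by (simp add: mdeg_def fun_eq_iff lookup_add)

lemma mdeg_zero: "mdeg 0 = 0"
  by (simp add: mdeg_def fun_eq_iff)

lemma keys_add_nat: "Poly_Mapping.keys (\<mu> + \<nu>) \<subseteq> Poly_Mapping.keys \<mu> \<union> Poly_Mapping.keys (\<nu> :: 'b \<Rightarrow>\<^sub>0 nat)"
  by (rule keys_add)

context
  fixes N :: "'a::euclidean_space set" and \<Sigma> :: "'a set set" and Bp
  assumes big: "big_subgroup N \<Sigma> Bp"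
begin

lemma Bp_add: "a \<in> Bp \<Longrightarrow> b \<in> Bp \<Longrightarrow> a + b \<in> Bp"
  using big by (simp add: big_subgroup_def)
lemma Bp_neg: "a \<in> Bp \<Longrightarrow> - a \<in> Bp"
  using big by (simp add: big_subgroup_def)
lemma Bp_zero: "0 \<in> Bp"
  using big by (simp add: big_subgroup_def)
lemma imc_Bp: "a \<in> imc N \<Sigma> \<Longrightarrow> a \<in> Bp"
  using big by (auto simp: big_subgroup_def)
lemma Bp_diff: "a \<in> Bp \<Longrightarrow> b \<in> Bp \<Longrightarrow> a - b \<in> Bp"
  by (metis Bp_add Bp_neg diff_conv_add_uminus)

lemma Bp_nat_mult: "a \<in> Bp \<Longrightarrow> (\<lambda>\<rho>. int n * a \<rho>) \<in> Bp"
proof (induction n)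
  case 0 then show ?case using Bp_zero by (simp add: zero_fun_def)
next
  case (Suc n)
  have "(\<lambda>\<rho>. int (Suc n) * a \<rho>) = a + (\<lambda>\<rho>. int n * a \<rho>)"
    by (simp add: fun_eq_iff algebra_simps)
  then show ?case using Suc Bp_add by simp
qed

lemma SB_mult:
  assumes "p \<in> SB \<Sigma> Bp" "q \<in> SB \<Sigma> Bp"
  shows "p * q \<in> SB \<Sigma> Bp"
proof -
  have "Poly_Mapping.keys \<mu> \<subseteq> rays \<Sigma> \<and> mdeg \<mu> \<in> Bp" if mu: "\<mu> \<in> Poly_Mapping.keys (p * q)" for \<mu>
  proof -
    obtain a b where ab: "\<mu> = a + b" "a \<in> Poly_Mapping.keys p" "b \<in> Poly_Mapping.keys q"
      using keys_mult[of p q] mu by blast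
    have "Poly_Mapping.keys \<mu> \<subseteq> Poly_Mapping.keys a \<union> Poly_Mapping.keys b"
      unfolding ab(1) by (rule keys_add)
    moreover have "Poly_Mapping.keys a \<subseteq> rays \<Sigma>" "Poly_Mapping.keys b \<subseteq> rays \<Sigma>"
      using assms ab by (auto simp: SB_def SA_def)
    moreover have "mdeg \<mu> \<in> Bp"
      using assms ab by (auto simp: SB_def mdeg_add intro!: Bp_add)
    ultimately show ?thesis by blast
  qed
  then show ?thesis by (simp add: SB_def SA_def)
qed

lemma SB_add: "p \<in> SB \<Sigma> Bp \<Longrightarrow> q \<in> SB \<Sigma> Bp \<Longrightarrow> p + q \<in> SB \<Sigma> Bp"
  by (auto simp: SB_def SA_def dest!: subsetD[OF keys_add[of p q]])

lemma SB_neg: "p \<in> SB \<Sigma> Bp \<Longrightarrow> - p \<in> SB \<Sigma> Bp"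
  by (auto simp: SB_def SA_def)

lemma SB_zero: "0 \<in> SB \<Sigma> Bp"
  by (auto simp: SB_def SA_def)

lemma SB_one: "1 \<in> SB \<Sigma> Bp"
  using Bp_zero by (auto simp: SB_def SA_def mdeg_zero)

end

lemma Scomp_mult:
  assumes "p \<in> Scomp N \<Sigma> a" "q \<in> Scomp N \<Sigma> b"
  shows "p * q \<in> Scomp N \<Sigma> (a + b)"
proof -
  have "Poly_Mapping.keys \<mu> \<subseteq> rays \<Sigma> \<and> mdeg \<mu> - (a + b) \<in> imc N \<Sigma>" if mu: "\<mu> \<in> Poly_Mapping.keys (p * q)" for \<mu>
  proof -
    obtain c d where cd: "\<mu> = c + d" "c \<in> Poly_Mapping.keys p" "d \<in> Poly_Mapping.keys q"
      using keys_mult[of p q] mu by blast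
    have k1: "Poly_Mapping.keys \<mu> \<subseteq> Poly_Mapping.keys c \<union> Poly_Mapping.keys d"
      unfolding cd(1) by (rule keys_add)
    have k2: "Poly_Mapping.keys c \<subseteq> rays \<Sigma>" "Poly_Mapping.keys d \<subseteq> rays \<Sigma>"
      using assms cd by (auto simp: Scomp_def SA_def)
    have eq: "mdeg \<mu> - (a + b) = (mdeg c - a) + (mdeg d - b)"
      by (simp add: cd(1) mdeg_add algebra_simps)
    have mem: "(mdeg c - a) + (mdeg d - b) \<in> imc N \<Sigma>"
      using assms cd by (auto simp: Scomp_def intro!: imc_add)
    have "mdeg \<mu> - (a + b) \<in> imc N \<Sigma>" by (subst eq) (rule mem)
    then show ?thesis using k1 k2 by blast
  qed
  then show ?thesis by (simp add: Scomp_def SA_def)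
qed

lemma Scomp_add: "p \<in> Scomp N \<Sigma> a \<Longrightarrow> q \<in> Scomp N \<Sigma> a \<Longrightarrow> p + q \<in> Scomp N \<Sigma> a"
  by (auto simp: Scomp_def SA_def dest!: subsetD[OF keys_add[of p q]])

lemma Scomp_neg: "p \<in> Scomp N \<Sigma> a \<Longrightarrow> - p \<in> Scomp N \<Sigma> a"
  by (auto simp: Scomp_def SA_def)

lemma Scomp_zero: "0 \<in> Scomp N \<Sigma> a"
  by (auto simp: Scomp_def SA_def)




locale locmod =
  fixes act :: "'p::comm_monoid_mult \<Rightarrow> 'm::ab_group_add \<Rightarrow> 'm" and f :: 'p and C :: "'m set" and P :: "'p set"
  assumes P_mult: "p \<in> P \<Longrightarrow> q \<in> P \<Longrightarrow> p * q \<in> P"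
    and P_one: "1 \<in> P"
    and f_P: "f \<in> P"
    and act_C: "p \<in> P \<Longrightarrow> v \<in> C \<Longrightarrow> act p v \<in> C"
    and act_mult: "p \<in> P \<Longrightarrow> q \<in> P \<Longrightarrow> v \<in> C \<Longrightarrow> act (p * q) v = act p (act q v)"
    and act_add: "p \<in> P \<Longrightarrow> v \<in> C \<Longrightarrow> w \<in> C \<Longrightarrow> act p (v + w) = act p v + act p w"
    and act_neg: "p \<in> P \<Longrightarrow> v \<in> C \<Longrightarrow> act p (- v) = - act p v"
    and C_add: "v \<in> C \<Longrightarrow> w \<in> C \<Longrightarrow> v + w \<in> C"
    and C_neg: "v \<in> C \<Longrightarrow> - v \<in> C"
    and C_zero: "0 \<in> C"
begin

lemma fpow_P: "f ^ n \<in> P"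
  by (induction n) (auto simp: P_one P_mult f_P)

lemma act_pow: "v \<in> C \<Longrightarrow> act (f ^ a) (act (f ^ b) v) = act (f ^ (a + b)) v"
  by (simp add: act_mult[symmetric] fpow_P power_add)

abbreviation "cls \<equiv> loc_cls act f C"

lemma mem_cls: "(w, l) \<in> cls (v, k) \<longleftrightarrow> v \<in> C \<and> w \<in> C \<and> (\<exists>j. act (f ^ (j + l)) v = act (f ^ (j + k)) w)"
  by (simp add: loc_cls_def loc_rel_def)

lemma rel_trans:
  assumes "v \<in> C" "w \<in> C" "u \<in> C"
    and "act (f ^ (j1 + l)) v = act (f ^ (j1 + k)) w"
    and "act (f ^ (j2 + n)) w = act (f ^ (j2 + l)) u"
  shows "act (f ^ ((j1 + j2 + l) + n)) v = act (f ^ ((j1 + j2 + l) + k)) u"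
proof -
  have "act (f ^ ((j1 + j2 + l) + n)) v = act (f ^ (j2 + n)) (act (f ^ (j1 + l)) v)"
    using assms(1) by (simp add: act_pow ac_simps)
  also have "\<dots> = act (f ^ (j2 + n)) (act (f ^ (j1 + k)) w)" using assms(4) by simp
  also have "\<dots> = act (f ^ (j1 + k)) (act (f ^ (j2 + n)) w)" using assms(2) by (simp add: act_pow ac_simps)
  also have "\<dots> = act (f ^ (j1 + k)) (act (f ^ (j2 + l)) u)" using assms(5) by simp
  also have "\<dots> = act (f ^ ((j1 + j2 + l) + k)) u" using assms(3) by (simp add: act_pow ac_simps)
  finally show ?thesis .
qed

lemma cls_refl: "v \<in> C \<Longrightarrow> (v, k) \<in> cls (v, k)"
  by (auto simp: mem_cls)

lemma cls_eqI:
  assumes "v \<in> C" "w \<in> C" "act (f ^ (j + l)) v = act (f ^ (j + k)) w"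
  shows "cls (v, k) = cls (w, l)"
proof (intro set_eqI iffI)
  fix x assume x: "x \<in> cls (v, k)"
  obtain u n where xe: "x = (u, n)" by force
  from x obtain i where u: "u \<in> C" and i: "act (f ^ (i + n)) v = act (f ^ (i + k)) u"
    by (auto simp: xe mem_cls)
  have "act (f ^ ((j + i + k) + n)) w = act (f ^ ((j + i + k) + l)) u"
    using rel_trans[OF assms(2) assms(1) u assms(3)[symmetric] i] .
  then show "x \<in> cls (w, l)" using assms u unfolding xe mem_cls by blast
next
  fix x assume x: "x \<in> cls (w, l)"
  obtain u n where xe: "x = (u, n)" by force
  from x obtain i where u: "u \<in> C" and i: "act (f ^ (i + n)) w = act (f ^ (i + l)) u"
    by (auto simp: xe mem_cls)
  have "act (f ^ ((j + i + l) + n)) v = act (f ^ ((j + i + l) + k)) u"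
    using rel_trans[OF assms(1) assms(2) u assms(3) i] .
  then show "x \<in> cls (v, k)" using assms u unfolding xe mem_cls by blast
qed

lemma cls_mem_eq:
  assumes "(w, l) \<in> cls (v, k)" shows "cls (w, l) = cls (v, k)"
proof -
  from assms obtain j where "v \<in> C" "w \<in> C" "act (f ^ (j + l)) v = act (f ^ (j + k)) w"
    by (auto simp: mem_cls)
  then have "cls (v, k) = cls (w, l)" by (rule cls_eqI)
  then show ?thesis by simp
qed

lemma the_elem_img:
  assumes "a \<in> A" "\<forall>x\<in>A. g x = c"
  shows "the_elem (g ` A) = c"
proof -
  have "g ` A = {c}" using assms by auto
  then show ?thesis by simp
qed

lemma loc_add_cls:
  assumes "v \<in> C" "w \<in> C"
  shows "loc_add act f C (cls (v, k)) (cls (w, l)) = cls (act (f ^ l) v + act (f ^ k) w, k + l)"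
  unfolding loc_add_def
proof (rule the_elem_img[where a = "((v, k), (w, l))"], goal_cases)
  case 1 show ?case using assms by (auto intro: cls_refl)
next
  case 2 show ?case proof
  fix x assume x: "x \<in> cls (v, k) \<times> cls (w, l)"
  obtain v' k' w' l' where xe: "x = ((v', k'), (w', l'))" by (metis prod.collapse)
  from x obtain i i' where v': "v' \<in> C" and w': "w' \<in> C"
    and i: "act (f ^ (i + k')) v = act (f ^ (i + k)) v'"
    and i': "act (f ^ (i' + l')) w = act (f ^ (i' + l)) w'"
    by (auto simp: xe mem_cls)
  have e1: "act (f ^ ((i + i') + (k + l))) (act (f ^ l') v') = act (f ^ ((i + i') + (k' + l'))) (act (f ^ l) v)"
  proof -
    have "act (f ^ ((i + i') + (k + l))) (act (f ^ l') v') = act (f ^ (i' + l + l')) (act (f ^ (i + k)) v')"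
      using v' by (simp add: act_pow ac_simps)
    also have "\<dots> = act (f ^ (i' + l + l')) (act (f ^ (i + k')) v)" using i by simp
    also have "\<dots> = act (f ^ ((i + i') + (k' + l'))) (act (f ^ l) v)" using assms(1) by (simp add: act_pow ac_simps)
    finally show ?thesis .
  qed
  have e2: "act (f ^ ((i + i') + (k + l))) (act (f ^ k') w') = act (f ^ ((i + i') + (k' + l'))) (act (f ^ k) w)"
  proof -
    have "act (f ^ ((i + i') + (k + l))) (act (f ^ k') w') = act (f ^ (i + k + k')) (act (f ^ (i' + l)) w')"
      using w' by (simp add: act_pow ac_simps)
    also have "\<dots> = act (f ^ (i + k + k')) (act (f ^ (i' + l')) w)" using i' by simp
    also have "\<dots> = act (f ^ ((i + i') + (k' + l'))) (act (f ^ k) w)" using assms(2) by (simp add: act_pow ac_simps)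
    finally show ?thesis .
  qed
  have "cls (act (f ^ l') v' + act (f ^ k') w', k' + l') = cls (act (f ^ l) v + act (f ^ k) w, k + l)"
    by (rule cls_eqI[where j = "i + i'"])
       (auto simp: act_add act_C fpow_P C_add v' w' assms e1 e2)
  then show "(\<lambda>((v, k), (w, l)). cls (act (f ^ l) v + act (f ^ k) w, k + l)) x =
    cls (act (f ^ l) v + act (f ^ k) w, k + l)"
    by (simp add: xe)
  qed
qed

lemma loc_neg_cls:
  assumes "v \<in> C"
  shows "loc_neg act f C (cls (v, k)) = cls (- v, k)"
  unfolding loc_neg_def
proof (rule the_elem_img[where a = "(v, k)"], goal_cases)
  case 1 show ?case using assms by (rule cls_refl)
next
  case 2 show ?case proof
  fix x assume x: "x \<in> cls (v, k)"
  obtain v' k' where xe: "x = (v', k')" by force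
  from x obtain i where v': "v' \<in> C" and i: "act (f ^ (i + k')) v = act (f ^ (i + k)) v'"
    by (auto simp: xe mem_cls)
  have "cls (- v', k') = cls (- v, k)"
    by (rule cls_eqI[where j = i]) (auto simp: act_neg fpow_P C_neg v' assms i)
  then show "(\<lambda>(v, k). cls (- v, k)) x = cls (- v, k)"
    by (simp add: xe)
  qed
qed

abbreviation "clsP \<equiv> loc_cls (*) f P"

lemma mem_clsP: "(q, l) \<in> clsP (p, k) \<longleftrightarrow> p \<in> P \<and> q \<in> P \<and> (\<exists>j. f ^ (j + l) * p = f ^ (j + k) * q)"
  by (simp add: loc_cls_def loc_rel_def)

lemma loc_smul_cls:
  assumes "p \<in> P" "v \<in> C"
  shows "loc_smul act f C (clsP (p, k)) (cls (v, l)) = cls (act p v, k + l)"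
  unfolding loc_smul_def
proof (rule the_elem_img[where a = "((p, k), (v, l))"], goal_cases)
  case 1 show ?case using assms by (auto simp: mem_clsP intro: cls_refl)
next
  case 2 show ?case proof
  fix x assume x: "x \<in> clsP (p, k) \<times> cls (v, l)"
  obtain p' k' v' l' where xe: "x = ((p', k'), (v', l'))" by (metis prod.collapse)
  from x obtain j i where p': "p' \<in> P" and v': "v' \<in> C"
    and j: "f ^ (j + k') * p = f ^ (j + k) * p'"
    and i: "act (f ^ (i + l')) v = act (f ^ (i + l)) v'"
    by (auto simp: xe mem_cls mem_clsP)
  have "act (f ^ ((i + j) + (k + l))) (act p' v') = act (f ^ (j + k) * p') (act (f ^ (i + l)) v')"
    using p' v' by (simp add: act_mult[symmetric] fpow_P P_mult power_add ac_simps)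
  also have "\<dots> = act (f ^ (j + k') * p) (act (f ^ (i + l')) v)" using i j by simp
  also have "\<dots> = act (f ^ ((i + j) + (k' + l'))) (act p v)"
    using assms by (simp add: act_mult[symmetric] fpow_P P_mult power_add ac_simps)
  finally have e: "act (f ^ ((i + j) + (k + l))) (act p' v') = act (f ^ ((i + j) + (k' + l'))) (act p v)" .
  have "cls (act p' v', k' + l') = cls (act p v, k + l)"
    by (rule cls_eqI[where j = "i + j"]) (auto simp: act_C p' v' assms e)
  then show "(\<lambda>((p, k), (v, l)). cls (act p v, k + l)) x = cls (act p v, k + l)"
    by (simp add: xe)
  qed
qed

end




lemma rays_finite: "is_fan N \<Sigma> \<Longrightarrow> finite (rays \<Sigma>)"
  unfolding is_fan_def rays_def by auto

lemma lookup_muZ: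
  assumes "finite R"
  shows "Poly_Mapping.lookup (\<Sum>\<rho>\<in>R. Poly_Mapping.single \<rho> (1::nat)) r = (if r \<in> R then 1 else 0)"
  using assms by (simp add: lookup_sum lookup_single when_def)

lemma Zhat_pow:
  assumes "finite (rays \<Sigma>)"
  shows "\<exists>\<nu>. (Zhat \<Sigma> \<sigma> :: ('a::euclidean_space, 'r::comm_ring_1) pol) ^ k = Poly_Mapping.single \<nu> 1 \<and>
     (\<forall>r. Poly_Mapping.lookup \<nu> r = (if r \<in> rays \<Sigma> - rays_of \<Sigma> \<sigma> then k else 0))"
proof (induction k)
  case 0
  show ?case by (rule exI[of _ 0]) simp
next
  case (Suc k)
  then obtain \<nu> where \<nu>: "(Zhat \<Sigma> \<sigma> :: ('a, 'r) pol) ^ k = Poly_Mapping.single \<nu> 1"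
    "\<forall>r. Poly_Mapping.lookup \<nu> r = (if r \<in> rays \<Sigma> - rays_of \<Sigma> \<sigma> then k else 0)" by blast
  define \<mu> where "\<mu> = (\<Sum>\<rho>\<in>rays \<Sigma> - rays_of \<Sigma> \<sigma>. Poly_Mapping.single \<rho> (1::nat))"
  have fin: "finite (rays \<Sigma> - rays_of \<Sigma> \<sigma>)" using assms by simp
  have "(Zhat \<Sigma> \<sigma> :: ('a, 'r) pol) ^ Suc k = Poly_Mapping.single \<mu> 1 * Poly_Mapping.single \<nu> 1"
    by (simp only: power_Suc \<nu>(1)) (simp add: Zhat_def \<mu>_def)
  also have "\<dots> = Poly_Mapping.single (\<mu> + \<nu>) 1" by (simp add: mult_single)
  finally show ?case
    using \<nu>(2) lookup_muZ[OF fin] by (intro exI[of _ "\<mu> + \<nu>"]) (auto simp: lookup_add \<mu>_def)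
qed

lemma locf_pow:
  assumes "finite (rays \<Sigma>)"
  shows "\<exists>\<nu>. (locf \<Sigma> \<sigma> m :: ('a::euclidean_space, 'r::comm_ring_1) pol) ^ n = Poly_Mapping.single \<nu> 1 \<and>
     (\<forall>r. Poly_Mapping.lookup \<nu> r = (if r \<in> rays \<Sigma> - rays_of \<Sigma> \<sigma> then n * m else 0))"
proof -
  have "(locf \<Sigma> \<sigma> m :: ('a, 'r) pol) ^ n = Zhat \<Sigma> \<sigma> ^ (n * m)"
    by (simp add: locf_def power_mult[symmetric] mult.commute)
  then show ?thesis using Zhat_pow[OF assms, of \<sigma> "n * m"] by auto
qed

lemma hatvec_eq: "hatvec \<Sigma> \<sigma> r = (if r \<in> rays \<Sigma> - rays_of \<Sigma> \<sigma> then 1 else 0)"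
  by (simp add: hatvec_def)

lemma locf_pow_SB:
  assumes fan: "is_fan N \<Sigma>" and big: "big_subgroup N \<Sigma> Bp" and \<sigma>: "\<sigma> \<in> \<Sigma>"
    and hat: "\<forall>\<tau>\<in>\<Sigma>. (\<lambda>\<rho>. int m * hatvec \<Sigma> \<tau> \<rho>) \<in> Bp"
  shows "(locf \<Sigma> \<sigma> m :: ('a::euclidean_space, 'r::comm_ring_1) pol) ^ n \<in> SB \<Sigma> Bp"
    and "(locf \<Sigma> \<sigma> m :: ('a, 'r) pol) ^ n \<in> Scomp N \<Sigma> (of_nat (n * m) * hatvec \<Sigma> \<sigma>)"
proof -
  obtain \<nu> where \<nu>: "(locf \<Sigma> \<sigma> m :: ('a, 'r) pol) ^ n = Poly_Mapping.single \<nu> 1"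
    "\<forall>r. Poly_Mapping.lookup \<nu> r = (if r \<in> rays \<Sigma> - rays_of \<Sigma> \<sigma> then n * m else 0)"
    using locf_pow[OF rays_finite[OF fan]] by blast
  have md: "mdeg \<nu> = of_nat (n * m) * hatvec \<Sigma> \<sigma>"
    using \<nu>(2) by (simp add: mdeg_def fun_eq_iff of_nat_fun hatvec_eq)
  have md2: "mdeg \<nu> = (\<lambda>\<rho>. int n * (int m * hatvec \<Sigma> \<sigma> \<rho>))"
    using \<nu>(2) by (simp add: mdeg_def fun_eq_iff hatvec_eq)
  have keys: "Poly_Mapping.keys \<nu> \<subseteq> rays \<Sigma>"
    using \<nu>(2) by (auto simp: in_keys_iff split: if_splits)
  have "mdeg \<nu> \<in> Bp" unfolding md2 using Bp_nat_mult[OF big] hat \<sigma> by blast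
  then show "(locf \<Sigma> \<sigma> m :: ('a, 'r) pol) ^ n \<in> SB \<Sigma> Bp"
    using keys by (simp add: \<nu>(1) SB_def SA_def)
  show "(locf \<Sigma> \<sigma> m :: ('a, 'r) pol) ^ n \<in> Scomp N \<Sigma> (of_nat (n * m) * hatvec \<Sigma> \<sigma>)"
    using keys imc_zero by (simp add: \<nu>(1) Scomp_def SA_def md)
qed


lemma nat_helper: "\<bar>a::int\<bar> \<le> int L \<Longrightarrow> nat (a + int L) + nat (- a + int L) = 2 * L"
  by arith

lemma unit_data:
  assumes lat: "is_lattice N" and fan: "is_fan N \<Sigma>" and big: "big_subgroup N \<Sigma> Bp"
    and small: "small_subgroup N \<Sigma> Bp" and \<sigma>: "\<sigma> \<in> \<Sigma>" and m: "m \<ge> 1"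
    and hat: "\<forall>\<tau>\<in>\<Sigma>. (\<lambda>\<rho>. int m * hatvec \<Sigma> \<tau> \<rho>) \<in> Bp" and x: "x \<in> Bp"
  shows "\<exists>K a b. a \<in> SB \<Sigma> Bp \<and> b \<in> SB \<Sigma> Bp \<and>
     a \<in> Scomp N \<Sigma> (x + of_nat (K * m) * hatvec \<Sigma> \<sigma>) \<and>
     b \<in> Scomp N \<Sigma> ((- x) + of_nat (K * m) * hatvec \<Sigma> \<sigma>) \<and>
     (a * b :: ('a::euclidean_space, 'r::comm_ring_1) pol) = locf \<Sigma> \<sigma> m ^ (2 * K)"
proof -
  have "x \<in> Pic_pre N \<Sigma>" using small x by (auto simp: small_subgroup_def)
  then obtain ms where ms1: "\<forall>\<sigma>\<in>\<Sigma>. ms \<sigma> \<in> dual_lattice N"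
    and ms2: "\<forall>\<sigma>\<in>\<Sigma>. \<forall>\<tau>. is_face \<tau> \<sigma> \<longrightarrow> ms \<sigma> - ms \<tau> \<in> perpM N \<tau>"
    and ms3: "x - (\<lambda>\<rho>. if \<rho> \<in> rays \<Sigma> then ms \<rho> (prim N \<rho>) else 0) \<in> imc N \<Sigma>"
    unfolding Pic_pre_def by blast
  define R where "R = rays \<Sigma> - rays_of \<Sigma> \<sigma>"
  have finR: "finite R" using rays_finite[OF fan] by (simp add: R_def)
  define u where "u = ms \<sigma>"
  have uM: "u \<in> dual_lattice N" using ms1 \<sigma> by (simp add: u_def)
  define msv where "msv = (\<lambda>\<rho>. if \<rho> \<in> rays \<Sigma> then ms \<rho> (prim N \<rho>) else 0)"
  define z where "z = msv - cmap N \<Sigma> u"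
  have cu: "cmap N \<Sigma> u \<in> imc N \<Sigma>" using uM by (simp add: imc_def)
  have eqz: "x - z = (x - msv) + cmap N \<Sigma> u" by (simp add: z_def)
  have "x - msv \<in> imc N \<Sigma>" using ms3 by (simp add: msv_def)
  then have "(x - msv) + cmap N \<Sigma> u \<in> imc N \<Sigma>" using cu by (rule imc_add)
  then have xz: "x - z \<in> imc N \<Sigma>" unfolding eqz .
  have zR: "z \<rho> = 0" if "\<rho> \<notin> R" for \<rho>
  proof (cases "\<rho> \<in> rays \<Sigma>")
    case False then show ?thesis by (simp add: z_def msv_def cmap_def)
  next
    case True
    with that have rf: "\<rho> \<in> rays_of \<Sigma> \<sigma>" by (simp add: R_def)
    then have face: "is_face \<rho> \<sigma>" by (simp add: rays_of_def)
    have "ms \<sigma> - ms \<rho> \<in> perpM N \<rho>" using ms2 \<sigma> face by blast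
    moreover have "prim N \<rho> \<in> N \<inter> \<rho>" using prim_in[OF lat fan True] .
    ultimately have "(ms \<sigma> - ms \<rho>) (prim N \<rho>) = 0" by (simp add: perpM_def)
    then show ?thesis using True by (simp add: z_def msv_def cmap_def u_def)
  qed
  have zB: "z \<in> Bp"
  proof -
    have "z = x - (x - z)" by simp
    moreover have "x - z \<in> Bp" using imc_Bp[OF big xz] .
    ultimately show ?thesis using Bp_diff[OF big x] by metis
  qed
  define K where "K = (\<Sum>\<rho>\<in>R. nat \<bar>z \<rho>\<bar>)"
  have zK: "\<bar>z \<rho>\<bar> \<le> int (K * m)" if "\<rho> \<in> R" for \<rho>
  proof -
    have "nat \<bar>z \<rho>\<bar> \<le> K" unfolding K_def using finR that by (intro member_le_sum) simp_all
    moreover have "K \<le> K * m" using m by simp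
    ultimately show ?thesis by linarith
  qed
  define H where "H = hatvec \<Sigma> \<sigma>"
  have H: "H \<rho> = (if \<rho> \<in> R then 1 else 0)" for \<rho> by (simp add: H_def R_def hatvec_eq)
  define fp where "fp = (\<lambda>\<rho>. if \<rho> \<in> R then nat (z \<rho> + int (K * m)) else 0)"
  define fn where "fn = (\<lambda>\<rho>. if \<rho> \<in> R then nat (- z \<rho> + int (K * m)) else 0)"
  have finp: "finite {\<rho>. fp \<rho> \<noteq> 0}" by (rule finite_subset[OF _ finR]) (auto simp: fp_def split: if_splits)
  have finn: "finite {\<rho>. fn \<rho> \<noteq> 0}" by (rule finite_subset[OF _ finR]) (auto simp: fn_def split: if_splits)
  define \<mu>p where "\<mu>p = Abs_poly_mapping fp"
  define \<mu>n where "\<mu>n = Abs_poly_mapping fn"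
  have lp: "Poly_Mapping.lookup \<mu>p = fp" using finp by (simp add: \<mu>p_def)
  have ln: "Poly_Mapping.lookup \<mu>n = fn" using finn by (simp add: \<mu>n_def)
  have KmH: "of_nat (K * m) * H = (\<lambda>\<rho>. int K * (int m * hatvec \<Sigma> \<sigma> \<rho>))"
    by (simp add: fun_eq_iff of_nat_fun H_def)
  have KmHB: "of_nat (K * m) * H \<in> Bp" unfolding KmH using Bp_nat_mult[OF big] hat \<sigma> by blast
  have mdp: "mdeg \<mu>p = z + of_nat (K * m) * H"
  proof
    fix \<rho> show "mdeg \<mu>p \<rho> = (z + of_nat (K * m) * H) \<rho>"
      using zK[of \<rho>] zR[of \<rho>] by (auto simp: mdeg_def lp fp_def H of_nat_fun)
  qed
  have mdn: "mdeg \<mu>n = - z + of_nat (K * m) * H"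
  proof
    fix \<rho> show "mdeg \<mu>n \<rho> = (- z + of_nat (K * m) * H) \<rho>"
      using zK[of \<rho>] zR[of \<rho>] by (auto simp: mdeg_def ln fn_def H of_nat_fun)
  qed
  have kp: "Poly_Mapping.keys \<mu>p \<subseteq> rays \<Sigma>" by (auto simp: in_keys_iff lp fp_def R_def split: if_splits)
  have kn: "Poly_Mapping.keys \<mu>n \<subseteq> rays \<Sigma>" by (auto simp: in_keys_iff ln fn_def R_def split: if_splits)
  define a :: "('a, 'r) pol" where "a = Poly_Mapping.single \<mu>p 1"
  define b :: "('a, 'r) pol" where "b = Poly_Mapping.single \<mu>n 1"
  have aSB: "a \<in> SB \<Sigma> Bp"
    using kp Bp_add[OF big zB KmHB] by (simp add: a_def SB_def SA_def mdp)
  have bSB: "b \<in> SB \<Sigma> Bp"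
    using kn Bp_add[OF big Bp_neg[OF big zB] KmHB] by (simp add: b_def SB_def SA_def mdn)
  have ep: "mdeg \<mu>p - (x + of_nat (K * m) * H) = - (x - z)" by (simp add: mdp)
  have dp: "mdeg \<mu>p - (x + of_nat (K * m) * H) \<in> imc N \<Sigma>" unfolding ep by (rule imc_neg[OF xz])
  have aS: "a \<in> Scomp N \<Sigma> (x + of_nat (K * m) * H)"
    using kp dp by (simp add: a_def Scomp_def SA_def)
  have en: "mdeg \<mu>n - ((- x) + of_nat (K * m) * H) = x - z" by (simp add: mdn)
  have dn: "mdeg \<mu>n - ((- x) + of_nat (K * m) * H) \<in> imc N \<Sigma>" unfolding en by (rule xz)
  have bS: "b \<in> Scomp N \<Sigma> ((- x) + of_nat (K * m) * H)"
    using kn dn by (simp add: b_def Scomp_def SA_def)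
  obtain \<nu> where \<nu>: "(locf \<Sigma> \<sigma> m :: ('a, 'r) pol) ^ (2 * K) = Poly_Mapping.single \<nu> 1"
    "\<forall>r. Poly_Mapping.lookup \<nu> r = (if r \<in> rays \<Sigma> - rays_of \<Sigma> \<sigma> then 2 * K * m else 0)"
    using locf_pow[OF rays_finite[OF fan]] by blast
  have "\<mu>p + \<mu>n = \<nu>"
  proof (rule poly_mapping_eqI)
    fix \<rho>
    show "Poly_Mapping.lookup (\<mu>p + \<mu>n) \<rho> = Poly_Mapping.lookup \<nu> \<rho>"
    proof (cases "\<rho> \<in> R")
      case True
      have "Poly_Mapping.lookup (\<mu>p + \<mu>n) \<rho> = nat (z \<rho> + int (K * m)) + nat (- z \<rho> + int (K * m))"
        using True by (simp add: lookup_add lp ln fp_def fn_def)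
      also have "\<dots> = 2 * (K * m)" by (rule nat_helper[OF zK[OF True]])
      also have "\<dots> = Poly_Mapping.lookup \<nu> \<rho>" using True \<nu>(2) by (simp add: R_def)
      finally show ?thesis .
    next
      case False
      have "Poly_Mapping.lookup (\<mu>p + \<mu>n) \<rho> = 0" using False by (simp add: lookup_add lp ln fp_def fn_def)
      moreover have "Poly_Mapping.lookup \<nu> \<rho> = 0" using False \<nu>(2) by (auto simp: R_def)
      ultimately show ?thesis by simp
    qed
  qed
  then have "a * b = locf \<Sigma> \<sigma> m ^ (2 * K)" by (simp add: a_def b_def mult_single \<nu>(1))
  then show ?thesis using aSB bSB aS bS unfolding H_def by blast
qed



lemma deg_id1: "((a::'b \<Rightarrow> int) + of_nat (k * m) * H) + (b + of_nat (l * m) * H) = (a + b) + of_nat ((k + l) * m) * H"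
  by (simp add: fun_eq_iff of_nat_fun algebra_simps)

lemma deg_id2: "of_nat (l * m) * H + ((a::'b \<Rightarrow> int) + of_nat (k * m) * H) = a + of_nat ((k + l) * m) * H"
  by (simp add: fun_eq_iff of_nat_fun algebra_simps)

lemma deg_id3: "((\<lambda>\<rho>. x \<rho> + y \<rho>) + of_nat (k * m) * H) + ((- y) + of_nat (K * m) * H) = (x::'b \<Rightarrow> int) + of_nat ((k + K) * m) * H"
  by (simp add: fun_eq_iff of_nat_fun algebra_simps)

lemma deg_id4: "((- x) + of_nat (K * m) * H) + (x + of_nat (l * m) * H) = (\<lambda>_. 0::int) + of_nat ((K + l) * m) * (H :: 'b \<Rightarrow> int)"
  by (simp add: fun_eq_iff of_nat_fun algebra_simps)

lemma deg_id5: "(x + of_nat (K * m) * H) + ((\<lambda>_. 0::int) + of_nat (n * m) * H) = x + of_nat ((K + n) * m) * (H :: 'b \<Rightarrow> int)"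
  by (simp add: fun_eq_iff of_nat_fun algebra_simps)

lemma xy_eq: "(\<lambda>\<rho>. x \<rho> + y \<rho>) = x + (y :: 'b \<Rightarrow> int)"
  by (simp add: fun_eq_iff)

theorem theorem3p330:
  fixes N :: "'a::euclidean_space set" and \<Sigma> :: "'a set set"
    and Bp :: "('a set \<Rightarrow> int) set" and \<sigma> :: "'a set" and m :: nat
  assumes "is_lattice N"
    and "is_fan N \<Sigma>"
    and "big_subgroup N \<Sigma> Bp"
    and "small_subgroup N \<Sigma> Bp"
    and "\<sigma> \<in> \<Sigma>"
    and "m \<ge> 1"
    and "\<forall>\<tau>\<in>\<Sigma>. (\<lambda>\<rho>. int m * hatvec \<Sigma> \<tau> \<rho>) \<in> Bp"
  shows
    "(\<forall>x\<in>Bp. \<forall>y\<in>Bp.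
        (SBloc_comp N \<Sigma> Bp \<sigma> m (\<lambda>\<rho>. x \<rho> + y \<rho>) :: (('a, 'r::comm_ring_1) pol \<times> nat) set set) =
        loc_subgroup_gen (*) (locf \<Sigma> \<sigma> m) (SB \<Sigma> Bp)
          {loc_smul (*) (locf \<Sigma> \<sigma> m) (SB \<Sigma> Bp) s t | s t.
             s \<in> SBloc_comp N \<Sigma> Bp \<sigma> m x \<and> t \<in> SBloc_comp N \<Sigma> Bp \<sigma> m y})
     \<and>
     (\<forall>(act :: ('a, 'r) pol \<Rightarrow> 'm::ab_group_add \<Rightarrow> 'm) Fg.
        graded_module N \<Sigma> Bp act Fg \<longrightarrow>
        (\<forall>x\<in>Bp. \<exists>\<phi>.
           bij_betw \<phi> (Floc_comp N \<Sigma> \<sigma> m act Fg x) (Floc_comp N \<Sigma> \<sigma> m act Fg (\<lambda>_. 0)) \<and>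
           (\<forall>u\<in>Floc_comp N \<Sigma> \<sigma> m act Fg x. \<forall>v\<in>Floc_comp N \<Sigma> \<sigma> m act Fg x.
              \<phi> (loc_add act (locf \<Sigma> \<sigma> m) UNIV u v) = loc_add act (locf \<Sigma> \<sigma> m) UNIV (\<phi> u) (\<phi> v)) \<and>
           (\<forall>s\<in>SBloc_comp N \<Sigma> Bp \<sigma> m (\<lambda>_. 0). \<forall>u\<in>Floc_comp N \<Sigma> \<sigma> m act Fg x.
              \<phi> (loc_smul act (locf \<Sigma> \<sigma> m) UNIV s u) = loc_smul act (locf \<Sigma> \<sigma> m) UNIV s (\<phi> u))))"
proof -
  note lat = assms(1) and fan = assms(2) and big = assms(3) and small = assms(4)
    and \<sigma> = assms(5) and m = assms(6) and hat = assms(7)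
  define f :: "('a, 'r) pol" where "f = locf \<Sigma> \<sigma> m"
  define H where "H = hatvec \<Sigma> \<sigma>"
  have fpow: "f ^ n \<in> SB \<Sigma> Bp" "f ^ n \<in> Scomp N \<Sigma> (of_nat (n * m) * H)" for n
    unfolding f_def H_def using locf_pow_SB[OF fan big \<sigma> hat] by blast+
  have fSB: "f \<in> SB \<Sigma> Bp" using fpow(1)[of 1] by simp
  have KmHB: "of_nat (K * m) * H \<in> Bp" for K
  proof -
    have "of_nat (K * m) * H = (\<lambda>\<rho>. int K * (int m * hatvec \<Sigma> \<sigma> \<rho>))"
      by (simp add: fun_eq_iff of_nat_fun H_def)
    then show ?thesis using Bp_nat_mult[OF big] hat \<sigma> by auto
  qed
  interpret R: locmod "(*)" f "SB \<Sigma> Bp" "SB \<Sigma> Bp"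
    by unfold_locales (auto intro: SB_mult[OF big] SB_add[OF big] SB_neg[OF big] SB_one[OF big]
        SB_zero[OF big] fSB simp: algebra_simps)
  have unit: "\<exists>K a b. a \<in> SB \<Sigma> Bp \<and> b \<in> SB \<Sigma> Bp \<and>
     a \<in> Scomp N \<Sigma> (x + of_nat (K * m) * H) \<and> b \<in> Scomp N \<Sigma> ((- x) + of_nat (K * m) * H) \<and>
     (a * b :: ('a, 'r) pol) = f ^ (K + K)" if "x \<in> Bp" for x
    using unit_data[OF lat fan big small \<sigma> m hat that] unfolding f_def H_def mult_2 by blast
  have compI: "R.cls (p, k) \<in> SBloc_comp N \<Sigma> Bp \<sigma> m z"
    if "p \<in> SB \<Sigma> Bp" "p \<in> Scomp N \<Sigma> (z + of_nat (k * m) * H)" for p k z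
    using that unfolding SBloc_comp_def f_def H_def by blast
  have compE: "\<exists>p k. c = R.cls (p, k) \<and> p \<in> SB \<Sigma> Bp \<and> p \<in> Scomp N \<Sigma> (z + of_nat (k * m) * H)"
    if "c \<in> SBloc_comp N \<Sigma> Bp \<sigma> m z" for c z
    using that unfolding SBloc_comp_def f_def H_def by blast
  have partA: "(SBloc_comp N \<Sigma> Bp \<sigma> m (\<lambda>\<rho>. x \<rho> + y \<rho>) :: (('a, 'r) pol \<times> nat) set set) =
        loc_subgroup_gen (*) f (SB \<Sigma> Bp)
          {loc_smul (*) f (SB \<Sigma> Bp) s t | s t.
             s \<in> SBloc_comp N \<Sigma> Bp \<sigma> m x \<and> t \<in> SBloc_comp N \<Sigma> Bp \<sigma> m y}"
    if x: "x \<in> Bp" and y: "y \<in> Bp" for x y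
  proof (intro set_eqI iffI)
    fix c assume c: "c \<in> (SBloc_comp N \<Sigma> Bp \<sigma> m (\<lambda>\<rho>. x \<rho> + y \<rho>) :: (('a, 'r) pol \<times> nat) set set)"
    obtain p k where pk: "c = R.cls (p, k)" "p \<in> SB \<Sigma> Bp"
      "p \<in> Scomp N \<Sigma> ((\<lambda>\<rho>. x \<rho> + y \<rho>) + of_nat (k * m) * H)"
      using compE[OF c] by blast
    obtain K a b where ab: "a \<in> SB \<Sigma> Bp" "b \<in> SB \<Sigma> Bp"
      "a \<in> Scomp N \<Sigma> (y + of_nat (K * m) * H)" "b \<in> Scomp N \<Sigma> ((- y) + of_nat (K * m) * H)"
      "(a * b :: ('a, 'r) pol) = f ^ (K + K)"
      using unit[OF y] by blast
    have s: "R.cls (p * b, k + K) \<in> SBloc_comp N \<Sigma> Bp \<sigma> m x"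
      using compI[OF SB_mult[OF big pk(2) ab(2)]] Scomp_mult[OF pk(3) ab(4)] unfolding deg_id3 by blast
    have t: "R.cls (a, K) \<in> SBloc_comp N \<Sigma> Bp \<sigma> m y"
      using compI[OF ab(1) ab(3)] .
    have "loc_smul (*) f (SB \<Sigma> Bp) (R.cls (p * b, k + K)) (R.cls (a, K)) = R.cls (p * b * a, k + K + K)"
      by (rule R.loc_smul_cls) (auto intro: SB_mult[OF big] pk ab)
    also have "\<dots> = R.cls (p, k)"
    proof (rule R.cls_eqI[where j = 0])
      show "p * b * a \<in> SB \<Sigma> Bp" by (auto intro: SB_mult[OF big] pk ab)
      show "p \<in> SB \<Sigma> Bp" by (rule pk)
      have "p * b * a = p * (a * b)" by (simp add: ac_simps)
      then have "p * b * a = p * f ^ (K + K)" using ab(5) by simp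
      then show "f ^ (0 + k) * (p * b * a) = f ^ (0 + (k + K + K)) * p"
        by (simp add: power_add ac_simps)
    qed
    finally have "c = loc_smul (*) f (SB \<Sigma> Bp) (R.cls (p * b, k + K)) (R.cls (a, K))" using pk(1) by simp
    then show "c \<in> loc_subgroup_gen (*) f (SB \<Sigma> Bp)
          {loc_smul (*) f (SB \<Sigma> Bp) s t | s t.
             s \<in> SBloc_comp N \<Sigma> Bp \<sigma> m x \<and> t \<in> SBloc_comp N \<Sigma> Bp \<sigma> m y}"
      using s t by (intro loc_subgroup_gen.gen_base) blast
  next
    fix c assume "c \<in> loc_subgroup_gen (*) f (SB \<Sigma> Bp)
          {loc_smul (*) f (SB \<Sigma> Bp) s t | s t.
             s \<in> SBloc_comp N \<Sigma> Bp \<sigma> m x \<and> t \<in> SBloc_comp N \<Sigma> Bp \<sigma> m y}"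
    then show "c \<in> (SBloc_comp N \<Sigma> Bp \<sigma> m (\<lambda>\<rho>. x \<rho> + y \<rho>) :: (('a, 'r) pol \<times> nat) set set)"
    proof (induction rule: loc_subgroup_gen.induct)
      case gen_zero
      have "loc_zero (*) f (SB \<Sigma> Bp) = R.cls (0, 0)" by (simp add: loc_zero_def)
      then show ?case using compI[OF SB_zero[OF big] Scomp_zero] by simp
    next
      case (gen_base g)
      then obtain s t where st: "g = loc_smul (*) f (SB \<Sigma> Bp) s t"
        "s \<in> SBloc_comp N \<Sigma> Bp \<sigma> m x" "t \<in> SBloc_comp N \<Sigma> Bp \<sigma> m y" by blast
      obtain p k where pk: "s = R.cls (p, k)" "p \<in> SB \<Sigma> Bp" "p \<in> Scomp N \<Sigma> (x + of_nat (k * m) * H)"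
        using compE[OF st(2)] by blast
      obtain q l where ql: "t = R.cls (q, l)" "q \<in> SB \<Sigma> Bp" "q \<in> Scomp N \<Sigma> (y + of_nat (l * m) * H)"
        using compE[OF st(3)] by blast
      have "g = R.cls (p * q, k + l)" unfolding st(1) pk(1) ql(1)
        by (rule R.loc_smul_cls[OF pk(2) ql(2)])
      moreover have "p * q \<in> Scomp N \<Sigma> ((\<lambda>\<rho>. x \<rho> + y \<rho>) + of_nat ((k + l) * m) * H)"
      proof -
        have e: "(\<lambda>\<rho>. x \<rho> + y \<rho>) + of_nat ((k + l) * m) * H = (x + y) + of_nat ((k + l) * m) * H"
          by (simp add: fun_eq_iff)
        show ?thesis using Scomp_mult[OF pk(3) ql(3)] unfolding deg_id1 e .
      qed
      ultimately show ?case using compI[OF SB_mult[OF big pk(2) ql(2)]] by simp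
    next
      case (gen_add c d)
      obtain p k where pk: "c = R.cls (p, k)" "p \<in> SB \<Sigma> Bp"
        "p \<in> Scomp N \<Sigma> ((\<lambda>\<rho>. x \<rho> + y \<rho>) + of_nat (k * m) * H)"
        using compE[OF gen_add.IH(1)] by blast
      obtain q l where ql: "d = R.cls (q, l)" "q \<in> SB \<Sigma> Bp"
        "q \<in> Scomp N \<Sigma> ((\<lambda>\<rho>. x \<rho> + y \<rho>) + of_nat (l * m) * H)"
        using compE[OF gen_add.IH(2)] by blast
      have e: "loc_add (*) f (SB \<Sigma> Bp) c d = R.cls (f ^ l * p + f ^ k * q, k + l)"
        unfolding pk(1) ql(1) by (rule R.loc_add_cls[OF pk(2) ql(2)])
      have "f ^ l * p \<in> Scomp N \<Sigma> ((\<lambda>\<rho>. x \<rho> + y \<rho>) + of_nat ((k + l) * m) * H)"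
        using Scomp_mult[OF fpow(2) pk(3)] unfolding deg_id2 .
      moreover have "f ^ k * q \<in> Scomp N \<Sigma> ((\<lambda>\<rho>. x \<rho> + y \<rho>) + of_nat ((k + l) * m) * H)"
        using Scomp_mult[OF fpow(2) ql(3)] unfolding deg_id2 by (simp add: add.commute)
      ultimately have "f ^ l * p + f ^ k * q \<in> Scomp N \<Sigma> ((\<lambda>\<rho>. x \<rho> + y \<rho>) + of_nat ((k + l) * m) * H)"
        by (rule Scomp_add)
      moreover have "f ^ l * p + f ^ k * q \<in> SB \<Sigma> Bp"
        by (intro SB_add[OF big] SB_mult[OF big] fpow(1) pk(2) ql(2))
      ultimately show ?case unfolding e by (rule compI[rotated])
    next
      case (gen_neg c)
      obtain p k where pk: "c = R.cls (p, k)" "p \<in> SB \<Sigma> Bp"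
        "p \<in> Scomp N \<Sigma> ((\<lambda>\<rho>. x \<rho> + y \<rho>) + of_nat (k * m) * H)"
        using compE[OF gen_neg.IH] by blast
      have e: "loc_neg (*) f (SB \<Sigma> Bp) c = R.cls (- p, k)"
        unfolding pk(1) by (rule R.loc_neg_cls[OF pk(2)])
      show ?case unfolding e by (rule compI[OF SB_neg[OF big pk(2)] Scomp_neg[OF pk(3)]])
    qed
  qed
  have partB: "\<exists>\<phi>.
           bij_betw \<phi> (Floc_comp N \<Sigma> \<sigma> m act Fg x) (Floc_comp N \<Sigma> \<sigma> m act Fg (\<lambda>_. 0)) \<and>
           (\<forall>u\<in>Floc_comp N \<Sigma> \<sigma> m act Fg x. \<forall>v\<in>Floc_comp N \<Sigma> \<sigma> m act Fg x.
              \<phi> (loc_add act f UNIV u v) = loc_add act f UNIV (\<phi> u) (\<phi> v)) \<and>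
           (\<forall>s\<in>SBloc_comp N \<Sigma> Bp \<sigma> m (\<lambda>_. 0). \<forall>u\<in>Floc_comp N \<Sigma> \<sigma> m act Fg x.
              \<phi> (loc_smul act f UNIV s u) = loc_smul act f UNIV s (\<phi> u))"
    if gm: "graded_module N \<Sigma> Bp (act :: ('a, 'r) pol \<Rightarrow> 'm::ab_group_add \<Rightarrow> 'm) Fg" and x: "x \<in> Bp"
    for act Fg x
  proof -
    note gmd = gm[unfolded graded_module_def]
    have A2: "\<forall>p\<in>SB \<Sigma> Bp. \<forall>v w. act p (v + w) = act p v + act p w"
      using gmd[THEN conjunct2, THEN conjunct1] .
    have A3: "\<forall>p\<in>SB \<Sigma> Bp. \<forall>q\<in>SB \<Sigma> Bp. \<forall>v. act (p * q) v = act p (act q v)"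
      using gmd[THEN conjunct2, THEN conjunct2, THEN conjunct1] .
    have A9: "\<forall>x\<in>Bp. \<forall>y\<in>Bp. \<forall>p\<in>Scomp N \<Sigma> x. \<forall>v\<in>Fg y. act p v \<in> Fg (x + y)"
      using gmd[THEN conjunct2, THEN conjunct2, THEN conjunct2, THEN conjunct2, THEN conjunct2,
        THEN conjunct2, THEN conjunct2, THEN conjunct2] .
    have gm_add1: "\<And>p v w. p \<in> SB \<Sigma> Bp \<Longrightarrow> act p (v + w) = act p v + act p w"
      using A2 by blast
    have gm_mult: "\<And>p q v. p \<in> SB \<Sigma> Bp \<Longrightarrow> q \<in> SB \<Sigma> Bp \<Longrightarrow> act (p * q) v = act p (act q v)"
      using A3 by blast
    have gm_deg: "\<And>z w p v. z \<in> Bp \<Longrightarrow> w \<in> Bp \<Longrightarrow> p \<in> Scomp N \<Sigma> z \<Longrightarrow> v \<in> Fg w \<Longrightarrow> act p v \<in> Fg (z + w)"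
      using A9 by blast
    have gm_neg: "act p (- v) = - act p v" if "p \<in> SB \<Sigma> Bp" for p v
    proof -
      have "act p (- v) + act p v = act p 0" using gm_add1[OF that, of "- v" v] by simp
      moreover have "act p 0 = 0" using gm_add1[OF that, of 0 0] by simp
      ultimately show ?thesis by (simp add: eq_neg_iff_add_eq_0)
    qed
    interpret M: locmod act f UNIV "SB \<Sigma> Bp"
      by unfold_locales (simp_all add: SB_mult[OF big] SB_one[OF big] fSB gm_mult gm_add1 gm_neg)
    obtain K a b where ab: "a \<in> SB \<Sigma> Bp" "b \<in> SB \<Sigma> Bp"
      "a \<in> Scomp N \<Sigma> (x + of_nat (K * m) * H)" "b \<in> Scomp N \<Sigma> ((- x) + of_nat (K * m) * H)"
      "(a * b :: ('a, 'r) pol) = f ^ (K + K)"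
      using unit[OF x] by blast
    have FlocI: "M.cls (v, k) \<in> Floc_comp N \<Sigma> \<sigma> m act Fg z" if "v \<in> Fg (z + of_nat (k * m) * H)" for v k z
      using that unfolding Floc_comp_def f_def H_def by blast
    have FlocE: "\<exists>v k. u = M.cls (v, k) \<and> v \<in> Fg (z + of_nat (k * m) * H)"
      if "u \<in> Floc_comp N \<Sigma> \<sigma> m act Fg z" for u z
      using that unfolding Floc_comp_def f_def H_def by blast
    have xB: "x + of_nat (l * m) * H \<in> Bp" for l using Bp_add[OF big x KmHB] .
    have nxB: "(- x) + of_nat (l * m) * H \<in> Bp" for l using Bp_add[OF big Bp_neg[OF big x] KmHB] .
    have zB: "(\<lambda>_. 0::int) + of_nat (l * m) * H \<in> Bp" for l
    proof -
      have e: "(\<lambda>_. 0::int) + of_nat (l * m) * H = of_nat (l * m) * H" by (simp add: fun_eq_iff)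
      show ?thesis unfolding e by (rule KmHB)
    qed
    define \<phi> where "\<phi> = loc_smul act f UNIV (R.cls (b, K))"
    define \<psi> where "\<psi> = loc_smul act f UNIV (R.cls (a, K))"
    have \<phi>cls: "\<phi> (M.cls (v, l)) = M.cls (act b v, K + l)" for v l
      unfolding \<phi>_def by (rule M.loc_smul_cls[OF ab(2)]) simp
    have \<psi>cls: "\<psi> (M.cls (v, l)) = M.cls (act a v, K + l)" for v l
      unfolding \<psi>_def by (rule M.loc_smul_cls[OF ab(1)]) simp
    have backc: "M.cls (act p (act q v), K + (K + l)) = M.cls (v, l)"
      if "p * q = f ^ (K + K)" "p \<in> SB \<Sigma> Bp" "q \<in> SB \<Sigma> Bp" for p q v l
    proof (rule M.cls_eqI[where j = 0])
      have "act (f ^ (0 + l)) (act p (act q v)) = act (f ^ l * (p * q)) v"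
        using that by (simp add: gm_mult[symmetric] M.fpow_P SB_mult[OF big])
      also have "\<dots> = act (f ^ (0 + (K + (K + l)))) v" using that(1) by (simp add: power_add ac_simps)
      finally show "act (f ^ (0 + l)) (act p (act q v)) = act (f ^ (0 + (K + (K + l)))) v" .
    qed simp_all
    have \<phi>into: "\<phi> u \<in> Floc_comp N \<Sigma> \<sigma> m act Fg (\<lambda>_. 0)" if uF: "u \<in> Floc_comp N \<Sigma> \<sigma> m act Fg x" for u
    proof -
      obtain v l where vl: "u = M.cls (v, l)" "v \<in> Fg (x + of_nat (l * m) * H)" using FlocE[OF uF] by blast
      have "act b v \<in> Fg (((- x) + of_nat (K * m) * H) + (x + of_nat (l * m) * H))"
        by (rule gm_deg[OF nxB xB ab(4) vl(2)])
      then have "act b v \<in> Fg ((\<lambda>_. 0) + of_nat ((K + l) * m) * H)" unfolding deg_id4 .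
      then show ?thesis unfolding vl(1) \<phi>cls by (rule FlocI)
    qed
    have \<psi>into: "\<psi> u \<in> Floc_comp N \<Sigma> \<sigma> m act Fg x" if uF: "u \<in> Floc_comp N \<Sigma> \<sigma> m act Fg (\<lambda>_. 0)" for u
    proof -
      obtain v l where vl: "u = M.cls (v, l)" "v \<in> Fg ((\<lambda>_. 0) + of_nat (l * m) * H)" using FlocE[OF uF] by blast
      have "act a v \<in> Fg ((x + of_nat (K * m) * H) + ((\<lambda>_. 0) + of_nat (l * m) * H))"
        by (rule gm_deg[OF xB zB ab(3) vl(2)])
      then have "act a v \<in> Fg (x + of_nat ((K + l) * m) * H)" unfolding deg_id5 .
      then show ?thesis unfolding vl(1) \<psi>cls by (rule FlocI)
    qed
    have bij: "bij_betw \<phi> (Floc_comp N \<Sigma> \<sigma> m act Fg x) (Floc_comp N \<Sigma> \<sigma> m act Fg (\<lambda>_. 0))"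
    proof (rule bij_betw_byWitness[where f' = \<psi>])
      show "\<forall>u\<in>Floc_comp N \<Sigma> \<sigma> m act Fg x. \<psi> (\<phi> u) = u"
      proof
        fix u assume "u \<in> Floc_comp N \<Sigma> \<sigma> m act Fg x"
        then obtain v l where vl: "u = M.cls (v, l)" using FlocE by blast
        show "\<psi> (\<phi> u) = u" unfolding vl \<phi>cls \<psi>cls by (rule backc[OF ab(5) ab(1) ab(2)])
      qed
      show "\<forall>u\<in>Floc_comp N \<Sigma> \<sigma> m act Fg (\<lambda>_. 0). \<phi> (\<psi> u) = u"
      proof
        fix u assume "u \<in> Floc_comp N \<Sigma> \<sigma> m act Fg (\<lambda>_. 0)"
        then obtain v l where vl: "u = M.cls (v, l)" using FlocE by blast
        have ba: "b * a = f ^ (K + K)" using ab(5) by (simp add: mult.commute)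
        show "\<phi> (\<psi> u) = u" unfolding vl \<phi>cls \<psi>cls by (rule backc[OF ba ab(2) ab(1)])
      qed
      show "\<phi> ` Floc_comp N \<Sigma> \<sigma> m act Fg x \<subseteq> Floc_comp N \<Sigma> \<sigma> m act Fg (\<lambda>_. 0)" using \<phi>into by blast
      show "\<psi> ` Floc_comp N \<Sigma> \<sigma> m act Fg (\<lambda>_. 0) \<subseteq> Floc_comp N \<Sigma> \<sigma> m act Fg x" using \<psi>into by blast
    qed
    have add: "\<phi> (loc_add act f UNIV u w) = loc_add act f UNIV (\<phi> u) (\<phi> w)"
      if uF: "u \<in> Floc_comp N \<Sigma> \<sigma> m act Fg x" "w \<in> Floc_comp N \<Sigma> \<sigma> m act Fg x" for u w
    proof -
      obtain v l where vl: "u = M.cls (v, l)" using FlocE[OF uF(1)] by blast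
      obtain v' l' where vl': "w = M.cls (v', l')" using FlocE[OF uF(2)] by blast
      have "\<phi> (loc_add act f UNIV u w) = M.cls (act b (act (f ^ l') v + act (f ^ l) v'), K + (l + l'))"
        unfolding vl vl' M.loc_add_cls[OF UNIV_I UNIV_I] \<phi>cls ..
      also have "\<dots> = M.cls (act (f ^ (K + l')) (act b v) + act (f ^ (K + l)) (act b v'), (K + l) + (K + l'))"
      proof (rule M.cls_eqI[where j = 0])
        have e1: "act (f ^ (0 + (K + l + (K + l')))) (act b (act (f ^ l') v)) =
                  act (f ^ (0 + (K + (l + l')))) (act (f ^ (K + l')) (act b v))"
        proof -
          have "act (f ^ (0 + (K + l + (K + l')))) (act b (act (f ^ l') v)) = act (f ^ (K + l + (K + l')) * b * f ^ l') v"
            using ab(2) by (simp add: gm_mult[symmetric] M.fpow_P SB_mult[OF big] mult.assoc)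
          also have "\<dots> = act (f ^ (K + (l + l')) * f ^ (K + l') * b) v"
            by (simp add: power_add ac_simps)
          also have "\<dots> = act (f ^ (0 + (K + (l + l')))) (act (f ^ (K + l')) (act b v))"
            using ab(2) by (simp add: gm_mult[symmetric] M.fpow_P SB_mult[OF big] mult.assoc)
          finally show ?thesis .
        qed
        have e2: "act (f ^ (0 + (K + l + (K + l')))) (act b (act (f ^ l) v')) =
                  act (f ^ (0 + (K + (l + l')))) (act (f ^ (K + l)) (act b v'))"
        proof -
          have "act (f ^ (0 + (K + l + (K + l')))) (act b (act (f ^ l) v')) = act (f ^ (K + l + (K + l')) * b * f ^ l) v'"
            using ab(2) by (simp add: gm_mult[symmetric] M.fpow_P SB_mult[OF big] mult.assoc)
          also have "\<dots> = act (f ^ (K + (l + l')) * f ^ (K + l) * b) v'"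
            by (simp add: power_add ac_simps)
          also have "\<dots> = act (f ^ (0 + (K + (l + l')))) (act (f ^ (K + l)) (act b v'))"
            using ab(2) by (simp add: gm_mult[symmetric] M.fpow_P SB_mult[OF big] mult.assoc)
          finally show ?thesis .
        qed
        show "act (f ^ (0 + (K + l + (K + l')))) (act b (act (f ^ l') v + act (f ^ l) v')) =
          act (f ^ (0 + (K + (l + l')))) (act (f ^ (K + l')) (act b v) + act (f ^ (K + l)) (act b v'))"
          using e1 e2 ab(2) by (simp add: gm_add1 M.fpow_P)
      qed simp_all
      also have "\<dots> = loc_add act f UNIV (\<phi> u) (\<phi> w)"
        unfolding vl vl' \<phi>cls M.loc_add_cls[OF UNIV_I UNIV_I] ..
      finally show ?thesis .
    qed
    have lin: "\<phi> (loc_smul act f UNIV s u) = loc_smul act f UNIV s (\<phi> u)"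
      if uF: "s \<in> SBloc_comp N \<Sigma> Bp \<sigma> m (\<lambda>_. 0)" "u \<in> Floc_comp N \<Sigma> \<sigma> m act Fg x" for s u
    proof -
      obtain p k where pk: "s = R.cls (p, k)" "p \<in> SB \<Sigma> Bp" using compE[OF uF(1)] by blast
      obtain v l where vl: "u = M.cls (v, l)" using FlocE[OF uF(2)] by blast
      have "\<phi> (loc_smul act f UNIV s u) = M.cls (act b (act p v), K + (k + l))"
        unfolding pk(1) vl M.loc_smul_cls[OF pk(2) UNIV_I] \<phi>cls ..
      also have "\<dots> = M.cls (act p (act b v), k + (K + l))"
      proof -
        have "act b (act p v) = act p (act b v)"
          using pk(2) ab(2) by (simp add: gm_mult[symmetric] mult.commute)
        then show ?thesis by (simp add: ac_simps)
      qed
      also have "\<dots> = loc_smul act f UNIV s (\<phi> u)"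
        unfolding pk(1) vl \<phi>cls M.loc_smul_cls[OF pk(2) UNIV_I] ..
      finally show ?thesis .
    qed
    show ?thesis using bij add lin by blast
  qed
  show ?thesis
    unfolding f_def[symmetric]
  proof (intro conjI ballI allI impI)
    fix x y assume "x \<in> Bp" "y \<in> Bp"
    then show "(SBloc_comp N \<Sigma> Bp \<sigma> m (\<lambda>\<rho>. x \<rho> + y \<rho>) :: (('a, 'r) pol \<times> nat) set set) =
        loc_subgroup_gen (*) f (SB \<Sigma> Bp)
          {loc_smul (*) f (SB \<Sigma> Bp) s t | s t.
             s \<in> SBloc_comp N \<Sigma> Bp \<sigma> m x \<and> t \<in> SBloc_comp N \<Sigma> Bp \<sigma> m y}"
      by (rule partA)
  next
    fix act :: "('a, 'r) pol \<Rightarrow> 'm::ab_group_add \<Rightarrow> 'm" and Fg x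
    assume "graded_module N \<Sigma> Bp act Fg" "x \<in> Bp"
    then show "\<exists>\<phi>.
           bij_betw \<phi> (Floc_comp N \<Sigma> \<sigma> m act Fg x) (Floc_comp N \<Sigma> \<sigma> m act Fg (\<lambda>_. 0)) \<and>
           (\<forall>u\<in>Floc_comp N \<Sigma> \<sigma> m act Fg x. \<forall>v\<in>Floc_comp N \<Sigma> \<sigma> m act Fg x.
              \<phi> (loc_add act f UNIV u v) = loc_add act f UNIV (\<phi> u) (\<phi> v)) \<and>
           (\<forall>s\<in>SBloc_comp N \<Sigma> Bp \<sigma> m (\<lambda>_. 0). \<forall>u\<in>Floc_comp N \<Sigma> \<sigma> m act Fg x.
              \<phi> (loc_smul act f UNIV s u) = loc_smul act f UNIV s (\<phi> u))"
      by (rule partB)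
  qed
qed

end
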